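(* Assume the standing hypotheses of the context and let $\varepsilon\in(0,\varepsilon_0]$. Then $\mathcal E_\varepsilon$ is lower semicontinuous on $\mathcal P_2(\mathbb R^d)^2$ with respect to (componentwise) weak $L^1(\mathbb R^d)$-convergence.
   Context: Let $d\ge1$. Standing hypotheses. (K): $K:\mathbb R^d\to[0,\infty)$ radially symmetric, $K(0)=0$, $K\in C^2$, $\nabla^2K\ge\lambda\,\mathrm{Id}$ for some $\lambda>0$, $\|\nabla^2K\|\le C_K$. (F): for $j=1,2$, $F_j:[0,\infty)\to[0,\infty)$ is $C^2$, $F_j''>0$ on $(0,\infty)$, $F_j(0)=F_j'(0)=0$, $\liminf_{r\to\infty}F_j''(r)>0$, $\limsup_{r\to\infty}F_j'(r)/F_j(r)<\infty$; there are $m_j,M_j>0,\beta_j\ge0,r_0>0$ with $m_jr^{\beta_j}\le F_j''(r)\le M_jr^{\beta_j}$ on $[0,r_0]$; $F_j(r)-rF_j'(r)+r^2F_j''(r)\ge0$. (h): $h:[0,\infty)^2\to\mathbb R$ is $C^2$, $h$ and $\nabla h$ vanish on $\{r_1=0\}\cup\{r_2=0\}$. ($\theta$): with $\theta_{j,i}(\mathbf u)=\partial_{r_i}\partial_{r_j}h(\mathbf r)/F_i''(r_i)$, $r_k=(F_k')^{-1}(u_k)$, each $\theta_{j,i}$ is locally Lipschitz on $[0,\infty)^2$ and $|\theta_{j,i}(\mathbf u)|\le\kappa_{j,i}\min\{1,u_1,u_2,\sqrt{(F_i')^{-1}(u_i)/(F_j')^{-1}(u_j)}\}$ for constants $\kappa_{j,i}>0$.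 Notation: $\mathcal P_2(\mathbb R^d)$ probability measures with finite second moment (absolutely continuous ones identified with densities); $\mathcal E_\varepsilon(\boldsymbol\rho)=\int[F_1(\rho_1)+F_2(\rho_2)+\varepsilon h(\rho_1,\rho_2)+\rho_1K*\rho_2]dx$, $=+\infty$ unless both components are absolutely continuous with integrand in $L^1$. $\varepsilon_0>0$ is a number such that $\mathbf r\mapsto F_1(r_1)+F_2(r_2)+2\varepsilon_0h(\mathbf r)$ is convex on $[0,\infty)^2$. *)

theory Defs
  imports "HOL-Analysis.Analysis"
begin

definition hyp_K :: "('a::euclidean_space \<Rightarrow> real) \<Rightarrow> bool" where
  "hyp_K K \<longleftrightarrow>
     (\<forall>x. K x \<ge> 0) \<and> (\<forall>x y. norm x = norm y \<longrightarrow> K x = K y) \<and> K 0 = 0 \<and>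
     (\<exists>(DK :: 'a \<Rightarrow> 'a) (HK :: 'a \<Rightarrow> ('a \<Rightarrow>\<^sub>L 'a)) (lam::real) (CK::real).
        lam > 0 \<and>
        (\<forall>x. (K has_derivative (\<lambda>v. DK x \<bullet> v)) (at x)) \<and>
        (\<forall>x. (DK has_derivative blinfun_apply (HK x)) (at x)) \<and>
        continuous_on UNIV HK \<and>
        (\<forall>x v. lam * (norm v)\<^sup>2 \<le> v \<bullet> blinfun_apply (HK x) v) \<and>
        (\<forall>x. norm (HK x) \<le> CK))"

definition hyp_F :: "(real \<Rightarrow> real) \<Rightarrow> (real \<Rightarrow> real) \<Rightarrow> (real \<Rightarrow> real) \<Rightarrow> bool" where
  "hyp_F F F' F'' \<longleftrightarrow>
     (\<forall>r\<ge>0. F r \<ge> 0) \<and>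
     (\<forall>r\<ge>0. (F has_real_derivative F' r) (at r within {0..})) \<and>
     (\<forall>r\<ge>0. (F' has_real_derivative F'' r) (at r within {0..})) \<and>
     continuous_on {0..} F'' \<and>
     (\<forall>r>0. F'' r > 0) \<and>
     F 0 = 0 \<and> F' 0 = 0 \<and>
     Liminf at_top (\<lambda>r. ereal (F'' r)) > 0 \<and>
     Limsup at_top (\<lambda>r. ereal (F' r / F r)) < \<infinity> \<and>
     (\<exists>m M \<beta> r0. m > 0 \<and> M > 0 \<and> \<beta> \<ge> 0 \<and> r0 > 0 \<and>
        (\<forall>r. 0 < r \<and> r \<le> r0 \<longrightarrow> m * r powr \<beta> \<le> F'' r \<and> F'' r \<le> M * r powr \<beta>)) \<and>
     (\<forall>r\<ge>0. F r - r * F' r + r\<^sup>2 * F'' r \<ge> 0)"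

definition quad :: "(real \<times> real) set" where
  "quad = {p. fst p \<ge> 0 \<and> snd p \<ge> 0}"

definition pc :: "nat \<Rightarrow> real \<times> real \<Rightarrow> real" where
  "pc k p = (if k = 1 then fst p else snd p)"

definition hyp_h :: "(real \<times> real \<Rightarrow> real) \<Rightarrow> (nat \<Rightarrow> real \<times> real \<Rightarrow> real)
     \<Rightarrow> (nat \<Rightarrow> nat \<Rightarrow> real \<times> real \<Rightarrow> real) \<Rightarrow> bool" where
  "hyp_h h dh ddh \<longleftrightarrow>
     (\<forall>p\<in>quad. (h has_derivative (\<lambda>v. dh 1 p * fst v + dh 2 p * snd v)) (at p within quad)) \<and>
     (\<forall>k\<in>{1,2}. \<forall>p\<in>quad.
        (dh k has_derivative (\<lambda>v. ddh k 1 p * fst v + ddh k 2 p * snd v)) (at p within quad)) \<and>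
     (\<forall>k\<in>{1,2}. \<forall>l\<in>{1,2}. continuous_on quad (ddh k l)) \<and>
     (\<forall>p\<in>quad. fst p = 0 \<or> snd p = 0 \<longrightarrow> h p = 0 \<and> dh 1 p = 0 \<and> dh 2 p = 0)"

definition rr :: "(nat \<Rightarrow> real \<Rightarrow> real) \<Rightarrow> real \<times> real \<Rightarrow> real \<times> real" where
  "rr dF u = (inv_into {0..} (dF 1) (fst u), inv_into {0..} (dF 2) (snd u))"

definition theta :: "(nat \<Rightarrow> real \<Rightarrow> real) \<Rightarrow> (nat \<Rightarrow> real \<Rightarrow> real)
     \<Rightarrow> (nat \<Rightarrow> nat \<Rightarrow> real \<times> real \<Rightarrow> real) \<Rightarrow> nat \<Rightarrow> nat \<Rightarrow> real \<times> real \<Rightarrow> real" where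
  "theta dF ddF ddh j i u = ddh j i (rr dF u) / ddF i (pc i (rr dF u))"

definition locally_lipschitz_on :: "(real \<times> real) set \<Rightarrow> (real \<times> real \<Rightarrow> real) \<Rightarrow> bool" where
  "locally_lipschitz_on S f \<longleftrightarrow>
     (\<forall>u\<in>S. \<exists>e>0. \<exists>L. \<forall>v\<in>ball u e \<inter> S. \<forall>w\<in>ball u e \<inter> S. \<bar>f v - f w\<bar> \<le> L * dist v w)"

definition hyp_theta :: "(nat \<Rightarrow> real \<Rightarrow> real) \<Rightarrow> (nat \<Rightarrow> real \<Rightarrow> real)
     \<Rightarrow> (nat \<Rightarrow> nat \<Rightarrow> real \<times> real \<Rightarrow> real) \<Rightarrow> bool" where
  "hyp_theta dF ddF ddh \<longleftrightarrow>
     (\<forall>j\<in>{1,2}. \<forall>i\<in>{1,2}.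
        locally_lipschitz_on quad (theta dF ddF ddh j i) \<and>
        (\<exists>\<kappa>>0. \<forall>u\<in>quad. \<bar>theta dF ddF ddh j i u\<bar> \<le>
            \<kappa> * min (min 1 (fst u)) (min (snd u) (sqrt (pc i (rr dF u) / pc j (rr dF u))))))"

definition conv :: "('a::euclidean_space \<Rightarrow> real) \<Rightarrow> ('a \<Rightarrow> real) \<Rightarrow> 'a \<Rightarrow> real" where
  "conv K \<rho> x = (\<integral>y. K (x - y) * \<rho> y \<partial>lborel)"

definition energy :: "real \<Rightarrow> (nat \<Rightarrow> real \<Rightarrow> real) \<Rightarrow> (real \<times> real \<Rightarrow> real)
     \<Rightarrow> ('a::euclidean_space \<Rightarrow> real) \<Rightarrow> ('a \<Rightarrow> real) \<Rightarrow> ('a \<Rightarrow> real) \<Rightarrow> ereal" where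
  "energy \<epsilon> F h K \<rho>1 \<rho>2 =
     (let f = (\<lambda>x. F 1 (\<rho>1 x) + F 2 (\<rho>2 x) + \<epsilon> * h (\<rho>1 x, \<rho>2 x) + \<rho>1 x * conv K \<rho>2 x)
      in if integrable lborel f then ereal (\<integral>x. f x \<partial>lborel) else \<infinity>)"

text \<open>Probability densities with finite second moment (absolutely continuous elements of P_2).\<close>
definition P2_density :: "('a::euclidean_space \<Rightarrow> real) \<Rightarrow> bool" where
  "P2_density \<rho> \<longleftrightarrow> (\<forall>x. \<rho> x \<ge> 0) \<and> integrable lborel \<rho> \<and> (\<integral>x. \<rho> x \<partial>lborel) = 1 \<and>
     integrable lborel (\<lambda>x. (norm x)\<^sup>2 * \<rho> x)"

definition weakL1_conv :: "(nat \<Rightarrow> 'a::euclidean_space \<Rightarrow> real) \<Rightarrow> ('a \<Rightarrow> real) \<Rightarrow> bool" where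
  "weakL1_conv \<rho>s \<rho> \<longleftrightarrow>
     (\<forall>g. g \<in> borel_measurable lborel \<and> bounded (range g) \<longrightarrow>
        (\<lambda>n. \<integral>x. \<rho>s n x * g x \<partial>lborel) \<longlonglongrightarrow> (\<integral>x. \<rho> x * g x \<partial>lborel))"

end

theory Submission
  imports Defs
begin

lemma grad_convex:
  fixes G :: "'a::real_normed_vector \<Rightarrow> real"
  assumes cv: "convex_on S G" and S: "convex S" and p: "p \<in> S" and q: "q \<in> S"
    and d: "(G has_derivative G') (at p within S)"
  shows "G' (q - p) \<le> G q - G p"
proof (cases "q = p")
  case True
  have "linear G'" using d has_derivative_linear by blast
  then show ?thesis using True by (simp add: linear_0)
next
  case False
  define \<gamma> where "\<gamma> t = p + t *\<^sub>R (q - p)" for t :: real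
  have \<gamma>S: "\<gamma> ` {0..1} \<subseteq> S"
  proof
    fix y assume "y \<in> \<gamma> ` {0..1}"
    then obtain t where t: "t \<in> {0..1}" "y = \<gamma> t" by auto
    have "\<gamma> t = (1 - t) *\<^sub>R p + t *\<^sub>R q" by (simp add: \<gamma>_def algebra_simps)
    then show "y \<in> S" using t S p q by (simp add: convex_alt)
  qed
  have d\<gamma>: "(\<gamma> has_derivative (\<lambda>t. t *\<^sub>R (q - p))) (at 0 within {0..1})"
    unfolding \<gamma>_def by (auto intro!: derivative_eq_intros)
  have d2: "(G has_derivative G') (at (\<gamma> 0) within (\<gamma> ` {0..1}))"
    using d \<gamma>S by (simp add: \<gamma>_def has_derivative_subset)
  have dg: "((\<lambda>t. G (\<gamma> t)) has_derivative (\<lambda>t. G' (t *\<^sub>R (q - p)))) (at 0 within {0..1})"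
    by (rule has_derivative_in_compose[OF d\<gamma> d2])
  have lin: "linear G'" using d has_derivative_linear by blast
  have "(\<lambda>t. G' (t *\<^sub>R (q - p))) = (\<lambda>t. t * G' (q - p))"
    using lin by (simp add: linear_scale)
  then have "((\<lambda>t. G (\<gamma> t)) has_field_derivative G' (q - p)) (at 0 within {0..1})"
    using dg by (simp add: has_field_derivative_def mult.commute[of _ "G' (q - p)"])
  then have lim: "((\<lambda>y. (G (\<gamma> y) - G (\<gamma> 0)) / (y - 0)) \<longlongrightarrow> G' (q - p)) (at_right 0)"
    by (simp add: has_field_derivative_iff at_within_Icc_at_right)
  have ev: "eventually (\<lambda>y. (G (\<gamma> y) - G (\<gamma> 0)) / (y - 0) \<le> G q - G p) (at_right (0::real))"
    unfolding eventually_at_right_field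
  proof (intro exI[of _ 1] conjI allI impI)
    fix y :: real assume y0: "0 < y" and y1: "y < 1"
    then have y: "0 < y \<and> y < 1" by simp
    have "G ((1 - y) *\<^sub>R p + y *\<^sub>R q) \<le> (1 - y) * G p + y * G q"
      using convex_onD[OF cv, of y p q] y p q by auto
    moreover have "\<gamma> y = (1 - y) *\<^sub>R p + y *\<^sub>R q" by (simp add: \<gamma>_def algebra_simps)
    ultimately have "G (\<gamma> y) - G (\<gamma> 0) \<le> y * (G q - G p)"
      by (simp add: \<gamma>_def algebra_simps)
    then show "(G (\<gamma> y) - G (\<gamma> 0)) / (y - 0) \<le> G q - G p"
      using y by (simp add: divide_le_eq mult.commute)
  qed simp
  show ?thesis
    using tendsto_le[OF trivial_limit_at_right_real tendsto_const lim ev] .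
qed

lemma grad_1d:
  fixes F dF ddF :: "real \<Rightarrow> real"
  assumes dF: "\<forall>r\<ge>0. (F has_real_derivative dF r) (at r within {0..})"
    and ddF: "\<forall>r\<ge>0. (dF has_real_derivative ddF r) (at r within {0..})"
    and pos: "\<forall>r>0. ddF r > 0"
    and p: "p \<ge> 0" and q: "q \<ge> 0"
  shows "dF p * (q - p) \<le> F q - F p"
proof -
  have atr: "at r within {0..} = at r" if "r > 0" for r :: real
    using that by (intro at_within_interior) (simp add: interior_real_atLeast)
  have contF: "continuous_on {0..} F"
    using dF by (metis DERIV_continuous atLeast_iff continuous_on_eq_continuous_within)
  have contdF: "continuous_on {0..} dF"
    using ddF by (metis DERIV_continuous atLeast_iff continuous_on_eq_continuous_within)
  have mono: "dF a \<le> dF b" if "0 \<le> a" "a \<le> b" for a b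
  proof (rule DERIV_nonneg_imp_increasing_open[OF \<open>a \<le> b\<close>])
    fix x assume "a < x" "x < b"
    then show "\<exists>y. DERIV dF x :> y \<and> y \<ge> 0"
    proof (intro exI[of _ "ddF x"] conjI)
      have "x \<ge> 0" "x > 0" using \<open>a < x\<close> that by auto
      then show "DERIV dF x :> ddF x" using ddF atr[of x] by metis
      show "ddF x \<ge> 0" using pos \<open>x > 0\<close> less_imp_le by blast
    qed
  next
    show "continuous_on {a..b} dF" by (rule continuous_on_subset[OF contdF]) (use that in auto)
  qed
  have mvt: "\<exists>z. a < z \<and> z < b \<and> F b - F a = (b - a) * dF z" if "0 \<le> a" "a < b" for a b
  proof -
    have "continuous_on {a..b} F" by (rule continuous_on_subset[OF contF]) (use that in auto)
    moreover have "F differentiable (at x)" if "a < x" "x < b" for x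
    proof -
      have "x > 0" "x \<ge> 0" using that \<open>0 \<le> a\<close> by auto
      then have "DERIV F x :> dF x" using dF atr[of x] by metis
      then show ?thesis using real_differentiable_def by blast
    qed
    ultimately obtain l z where "a < z" "z < b" "DERIV F z :> l" "F b - F a = (b - a) * l"
      using MVT[OF \<open>a < b\<close>] by blast
    moreover have "DERIV F z :> dF z"
    proof -
      have "z > 0" "z \<ge> 0" using \<open>a < z\<close> that by auto
      then show ?thesis using dF atr[of z] by metis
    qed
    ultimately show ?thesis using DERIV_unique by blast
  qed
  show ?thesis
  proof (cases p q rule: linorder_cases)
    case less
    then obtain z where z: "p < z" "z < q" "F q - F p = (q - p) * dF z" using mvt p by blast
    then have "dF p \<le> dF z" using mono p by simp
    then show ?thesis using z less by (simp add: mult.commute mult_right_mono)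
  next
    case equal then show ?thesis by simp
  next
    case greater
    then obtain z where z: "q < z" "z < p" "F p - F q = (p - q) * dF z" using mvt q by blast
    then have "dF z \<le> dF p" using mono q by simp
    then have "(p - q) * dF z \<le> (p - q) * dF p" using greater by (simp add: mult_left_mono)
    then show ?thesis using z by (simp add: algebra_simps)
  qed
qed


lemma liminf_sup_approx:
  fixes a :: "nat \<Rightarrow> ereal" and A :: ennreal and c :: "nat \<Rightarrow> real"
  assumes a0: "\<And>n. 0 \<le> a n"
    and A: "A \<le> (SUP R. ennreal (c R))"
    and s: "\<And>R. \<exists>s. (\<forall>n. ereal (s n) \<le> a n) \<and> s \<longlonglongrightarrow> c R"
  shows "enn2ereal A \<le> liminf a"
proof -
  define L where "L = liminf a"
  have L0: "0 \<le> L" unfolding L_def using a0 by (intro Liminf_bounded) auto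
  have cR: "ennreal (c R) \<le> e2ennreal L" for R
  proof -
    obtain s where s1: "\<forall>n. ereal (s n) \<le> a n" and s2: "s \<longlonglongrightarrow> c R" using s by blast
    have "(\<lambda>n. ereal (s n)) \<longlonglongrightarrow> ereal (c R)" using s2 by (simp add: tendsto_ereal)
    then have "liminf (\<lambda>n. ereal (s n)) = ereal (c R)" by (simp add: lim_imp_Liminf)
    moreover have "liminf (\<lambda>n. ereal (s n)) \<le> liminf a" using s1 by (intro Liminf_mono) auto
    ultimately have "ereal (c R) \<le> L" unfolding L_def by simp
    then show ?thesis using e2ennreal_mono by fastforce
  qed
  have "A \<le> e2ennreal L" using A cR by (meson SUP_least order_trans)
  then have "enn2ereal A \<le> enn2ereal (e2ennreal L)" by (simp add: less_eq_ennreal.rep_eq)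
  also have "\<dots> = L" using L0 by (simp add: enn2ereal_e2ennreal)
  finally show ?thesis unfolding L_def .
qed

lemma int_le_nn:
  fixes f g :: "'a \<Rightarrow> real"
  assumes f: "integrable M f" and fg: "\<And>x. f x \<le> g x" and g0: "\<And>x. 0 \<le> g x"
  shows "ereal (integral\<^sup>L M f) \<le> enn2ereal (\<integral>\<^sup>+x. ennreal (g x) \<partial>M)"
proof -
  have im: "integrable M (\<lambda>x. max 0 (f x))" using f by (intro integrable_max) auto
  have "integral\<^sup>L M f \<le> integral\<^sup>L M (\<lambda>x. max 0 (f x))"
    using f im by (intro integral_mono) auto
  moreover have "ennreal (integral\<^sup>L M (\<lambda>x. max 0 (f x))) = (\<integral>\<^sup>+x. ennreal (max 0 (f x)) \<partial>M)"
    using im by (intro nn_integral_eq_integral[symmetric]) auto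
  moreover have "(\<integral>\<^sup>+x. ennreal (max 0 (f x)) \<partial>M) \<le> (\<integral>\<^sup>+x. ennreal (g x) \<partial>M)"
    using fg g0 by (intro nn_integral_mono) (auto intro: ennreal_leI)
  ultimately have "ennreal (integral\<^sup>L M (\<lambda>x. max 0 (f x))) \<le> (\<integral>\<^sup>+x. ennreal (g x) \<partial>M)" by simp
  then have "enn2ereal (ennreal (integral\<^sup>L M (\<lambda>x. max 0 (f x)))) \<le> enn2ereal (\<integral>\<^sup>+x. ennreal (g x) \<partial>M)"
    by (simp add: less_eq_ennreal.rep_eq)
  moreover have "0 \<le> integral\<^sup>L M (\<lambda>x. max 0 (f x))" by (intro integral_nonneg_AE) auto
  ultimately show ?thesis
    using \<open>integral\<^sup>L M f \<le> _\<close> by (metis enn2ereal_ennreal ereal_less_eq(3) order_trans)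
qed

lemma integrable_mult_bdd:
  fixes f g :: "'a \<Rightarrow> real"
  assumes f: "integrable M f" and g: "g \<in> borel_measurable M" and B: "\<And>x. \<bar>g x\<bar> \<le> B"
  shows "integrable M (\<lambda>x. f x * g x)"
proof (rule Bochner_Integration.integrable_bound[of _ "\<lambda>x. B * f x"])
  show "integrable M (\<lambda>x. B * f x)" using f by simp
  show "(\<lambda>x. f x * g x) \<in> borel_measurable M" using f g by (simp add: borel_measurable_integrable)
  show "AE x in M. norm (f x * g x) \<le> norm (B * f x)"
  proof (intro AE_I2)
    fix x
    have "\<bar>f x\<bar> * \<bar>g x\<bar> \<le> \<bar>f x\<bar> * \<bar>B\<bar>" using B[of x] by (intro mult_left_mono) auto
    then show "norm (f x * g x) \<le> norm (B * f x)" by (simp add: abs_mult mult.commute)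
  qed
qed

definition clampq :: "real \<times> real \<Rightarrow> real \<times> real" where
  "clampq p = (max 0 (fst p), max 0 (snd p))"

lemma meas_quad:
  fixes f :: "real \<times> real \<Rightarrow> real" and \<rho>1 \<rho>2 :: "'a \<Rightarrow> real"
  assumes f: "continuous_on quad f"
    and m1: "\<rho>1 \<in> borel_measurable M" and m2: "\<rho>2 \<in> borel_measurable M"
    and n1: "\<And>x. 0 \<le> \<rho>1 x" and n2: "\<And>x. 0 \<le> \<rho>2 x"
  shows "(\<lambda>x. f (\<rho>1 x, \<rho>2 x)) \<in> borel_measurable M"
proof -
  have c: "continuous_on UNIV clampq" unfolding clampq_def by (intro continuous_intros)
  have "clampq ` UNIV \<subseteq> quad" by (auto simp: clampq_def quad_def)
  then have "continuous_on UNIV (\<lambda>p. f (clampq p))"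
    by (intro continuous_on_compose2[OF f c]) auto
  then have "(\<lambda>x. f (clampq (\<rho>1 x, \<rho>2 x))) \<in> borel_measurable M"
    by (rule borel_measurable_continuous_on) (intro borel_measurable_Pair m1 m2)
  moreover have "clampq (\<rho>1 x, \<rho>2 x) = (\<rho>1 x, \<rho>2 x)" for x using n1 n2 by (simp add: clampq_def)
  ultimately show ?thesis by simp
qed


lemma cont_bdd_quad:
  fixes f :: "real \<times> real \<Rightarrow> real"
  assumes f: "continuous_on quad f"
  shows "\<exists>B. \<forall>p\<in>{0..r} \<times> {0..r}. \<bar>f p\<bar> \<le> B"
proof -
  have sub: "{0..r} \<times> {0..r} \<subseteq> quad" by (auto simp: quad_def)
  have "compact ({0..r} \<times> {0..r::real})" by (intro compact_Times compact_Icc)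
  then have "compact (f ` ({0..r} \<times> {0..r}))"
    by (intro compact_continuous_image continuous_on_subset[OF f sub])
  then have "bounded (f ` ({0..r} \<times> {0..r}))" by (rule compact_imp_bounded)
  then show ?thesis by (auto simp: bounded_real)
qed

lemma integrable_ind_cball: "integrable lborel (\<lambda>x::'a::euclidean_space. indicator (cball 0 r) x :: real)"
  by (intro integrable_real_indicator emeasure_bounded_finite) auto

lemma local_lsc:
  fixes \<Phi> D1 D2 :: "real \<times> real \<Rightarrow> real" and \<rho>1 \<rho>2 :: "'a::euclidean_space \<Rightarrow> real"
    and \<rho>1s \<rho>2s :: "nat \<Rightarrow> 'a \<Rightarrow> real"
  assumes c\<Phi>: "continuous_on quad \<Phi>" and c1: "continuous_on quad D1" and c2: "continuous_on quad D2"
    and \<Phi>0: "\<forall>p\<in>quad. 0 \<le> \<Phi> p"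
    and grad: "\<forall>p\<in>quad. \<forall>q\<in>quad. \<Phi> p + D1 p * (fst q - fst p) + D2 p * (snd q - snd p) \<le> \<Phi> q"
    and n1: "\<forall>x. 0 \<le> \<rho>1 x" and n2: "\<forall>x. 0 \<le> \<rho>2 x" and ns: "\<forall>n x. 0 \<le> \<rho>1s n x \<and> 0 \<le> \<rho>2s n x"
    and i1: "integrable lborel \<rho>1" and i2: "integrable lborel \<rho>2"
    and iss: "\<forall>n. integrable lborel (\<rho>1s n) \<and> integrable lborel (\<rho>2s n)"
    and w1: "weakL1_conv \<rho>1s \<rho>1" and w2: "weakL1_conv \<rho>2s \<rho>2"
  shows "enn2ereal (\<integral>\<^sup>+x. ennreal (\<Phi> (\<rho>1 x, \<rho>2 x)) \<partial>lborel)
     \<le> liminf (\<lambda>n. enn2ereal (\<integral>\<^sup>+x. ennreal (\<Phi> (\<rho>1s n x, \<rho>2s n x)) \<partial>lborel))"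
proof -
  have m1[measurable]: "\<rho>1 \<in> borel_measurable lborel" using i1 by (rule borel_measurable_integrable)
  have m2[measurable]: "\<rho>2 \<in> borel_measurable lborel" using i2 by (rule borel_measurable_integrable)
  have ms1: "\<rho>1s n \<in> borel_measurable lborel" for n using iss borel_measurable_integrable by blast
  have ms2: "\<rho>2s n \<in> borel_measurable lborel" for n using iss borel_measurable_integrable by blast
  have mq: "(\<lambda>x. f (\<rho>1 x, \<rho>2 x)) \<in> borel_measurable lborel" if "continuous_on quad f" for f :: "real \<times> real \<Rightarrow> real"
    by (rule meas_quad[where M=lborel]) (use that m1 m2 n1 n2 in auto)
  have mqs: "(\<lambda>x. f (\<rho>1s n x, \<rho>2s n x)) \<in> borel_measurable lborel" if "continuous_on quad f" for f :: "real \<times> real \<Rightarrow> real" and n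
    by (rule meas_quad[where M=lborel]) (use that ms1 ms2 ns in auto)
  define E where "E R = {x::'a. norm x \<le> real R \<and> \<rho>1 x \<le> real R \<and> \<rho>2 x \<le> real R}" for R :: nat
  have Emeas[measurable]: "E R \<in> sets lborel" for R
  proof -
    have "E R = {x \<in> space lborel. norm x \<le> real R \<and> \<rho>1 x \<le> real R \<and> \<rho>2 x \<le> real R}"
      by (auto simp: E_def)
    also have "\<dots> \<in> sets lborel" by measurable
    finally show ?thesis .
  qed
  have mqE: "(\<lambda>x. indicator (E R) x * f (\<rho>1 x, \<rho>2 x)) \<in> borel_measurable lborel"
    if "continuous_on quad f" for f :: "real \<times> real \<Rightarrow> real" and R
    using mq[OF that] by measurable
  define c where "c R = (\<integral>x. indicator (E R) x * \<Phi> (\<rho>1 x, \<rho>2 x) \<partial>lborel)" for R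
  define a where "a n = enn2ereal (\<integral>\<^sup>+x. ennreal (\<Phi> (\<rho>1s n x, \<rho>2s n x)) \<partial>lborel)" for n
  have key: "integrable lborel (\<lambda>x. indicator (E R) x * \<Phi> (\<rho>1 x, \<rho>2 x)) \<and>
      (\<exists>s. (\<forall>n. ereal (s n) \<le> a n) \<and> s \<longlonglongrightarrow> c R)" for R
  proof -
    obtain B0 where B0: "\<forall>p\<in>{0..real R} \<times> {0..real R}. \<bar>\<Phi> p\<bar> \<le> B0" using cont_bdd_quad[OF c\<Phi>] by blast
    obtain B1 where B1: "\<forall>p\<in>{0..real R} \<times> {0..real R}. \<bar>D1 p\<bar> \<le> B1" using cont_bdd_quad[OF c1] by blast
    obtain B2 where B2: "\<forall>p\<in>{0..real R} \<times> {0..real R}. \<bar>D2 p\<bar> \<le> B2" using cont_bdd_quad[OF c2] by blast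
    have inQ: "(\<rho>1 x, \<rho>2 x) \<in> {0..real R} \<times> {0..real R}" if "x \<in> E R" for x
      using that n1 n2 by (auto simp: E_def)
    have bdd: "\<bar>indicator (E R) x * f (\<rho>1 x, \<rho>2 x)\<bar> \<le> B"
      if "\<forall>p\<in>{0..real R} \<times> {0..real R}. \<bar>f p\<bar> \<le> B" for f :: "real \<times> real \<Rightarrow> real" and B x
    proof (cases "x \<in> E R")
      case True then show ?thesis using that inQ[OF True] by auto
    next
      case False
      have "0 \<le> B" using that by (metis abs_ge_zero atLeastAtMost_iff mem_Sigma_iff order.trans order_refl of_nat_0_le_iff)
      then show ?thesis using False by simp
    qed
    define g1 where "g1 x = indicator (E R) x * D1 (\<rho>1 x, \<rho>2 x)" for x
    define g2 where "g2 x = indicator (E R) x * D2 (\<rho>1 x, \<rho>2 x)" for x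
    have g1m: "g1 \<in> borel_measurable lborel" unfolding g1_def by (rule mqE[OF c1])
    have g2m: "g2 \<in> borel_measurable lborel" unfolding g2_def by (rule mqE[OF c2])
    have g1b: "\<bar>g1 x\<bar> \<le> B1" for x unfolding g1_def by (rule bdd[OF B1])
    have g2b: "\<bar>g2 x\<bar> \<le> B2" for x unfolding g2_def by (rule bdd[OF B2])
    have g1r: "bounded (range g1)" using g1b by (auto simp: bounded_real)
    have g2r: "bounded (range g2)" using g2b by (auto simp: bounded_real)
    have intE: "integrable lborel (\<lambda>x. indicator (E R) x * \<Phi> (\<rho>1 x, \<rho>2 x))"
    proof (rule Bochner_Integration.integrable_bound[of _ "\<lambda>x. B0 * indicator (cball 0 (real R)) x"])
      show "integrable lborel (\<lambda>x. B0 * indicator (cball 0 (real R)) x :: real)"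
        using integrable_ind_cball by (intro integrable_mult_right) auto
      show "(\<lambda>x. indicator (E R) x * \<Phi> (\<rho>1 x, \<rho>2 x)) \<in> borel_measurable lborel" by (rule mqE[OF c\<Phi>])
      show "AE x in lborel. norm (indicator (E R) x * \<Phi> (\<rho>1 x, \<rho>2 x)) \<le> norm (B0 * indicator (cball 0 (real R)) x :: real)"
      proof (intro AE_I2)
        fix x
        show "norm (indicator (E R) x * \<Phi> (\<rho>1 x, \<rho>2 x)) \<le> norm (B0 * indicator (cball 0 (real R)) x :: real)"
        proof (cases "x \<in> E R")
          case True
          then have "x \<in> cball 0 (real R)" by (auto simp: E_def)
          have "\<bar>\<Phi> (\<rho>1 x, \<rho>2 x)\<bar> \<le> B0" using B0 inQ[OF True] by blast
          then show ?thesis using True \<open>x \<in> cball 0 (real R)\<close> by auto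
        next
          case False then show ?thesis by simp
        qed
      qed
    qed
    have ig1: "integrable lborel (\<lambda>x. \<rho>1 x * g1 x)" by (rule integrable_mult_bdd[OF i1 g1m g1b])
    have ig2: "integrable lborel (\<lambda>x. \<rho>2 x * g2 x)" by (rule integrable_mult_bdd[OF i2 g2m g2b])
    have igs1: "integrable lborel (\<lambda>x. \<rho>1s n x * g1 x)" for n using iss by (intro integrable_mult_bdd[OF _ g1m g1b]) auto
    have igs2: "integrable lborel (\<lambda>x. \<rho>2s n x * g2 x)" for n using iss by (intro integrable_mult_bdd[OF _ g2m g2b]) auto
    define s where "s n = c R + ((\<integral>x. \<rho>1s n x * g1 x \<partial>lborel) - (\<integral>x. \<rho>1 x * g1 x \<partial>lborel))
       + ((\<integral>x. \<rho>2s n x * g2 x \<partial>lborel) - (\<integral>x. \<rho>2 x * g2 x \<partial>lborel))" for n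
    have lim1: "(\<lambda>n. \<integral>x. \<rho>1s n x * g1 x \<partial>lborel) \<longlonglongrightarrow> (\<integral>x. \<rho>1 x * g1 x \<partial>lborel)"
      using w1 g1m g1r unfolding weakL1_conv_def by blast
    have lim2: "(\<lambda>n. \<integral>x. \<rho>2s n x * g2 x \<partial>lborel) \<longlonglongrightarrow> (\<integral>x. \<rho>2 x * g2 x \<partial>lborel)"
      using w2 g2m g2r unfolding weakL1_conv_def by blast
    have "s \<longlonglongrightarrow> c R + ((\<integral>x. \<rho>1 x * g1 x \<partial>lborel) - (\<integral>x. \<rho>1 x * g1 x \<partial>lborel))
       + ((\<integral>x. \<rho>2 x * g2 x \<partial>lborel) - (\<integral>x. \<rho>2 x * g2 x \<partial>lborel))"
      unfolding s_def by (intro tendsto_intros lim1 lim2)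
    then have slim: "s \<longlonglongrightarrow> c R" by simp
    have sle: "ereal (s n) \<le> a n" for n
    proof -
      define L where "L x = indicator (E R) x * \<Phi> (\<rho>1 x, \<rho>2 x) + (\<rho>1s n x * g1 x - \<rho>1 x * g1 x)
         + (\<rho>2s n x * g2 x - \<rho>2 x * g2 x)" for x
      have iL: "integrable lborel L" unfolding L_def
        by (intro Bochner_Integration.integrable_add Bochner_Integration.integrable_diff intE ig1 ig2 igs1 igs2)
      have "integral\<^sup>L lborel L = s n" unfolding L_def s_def c_def
        by (simp add: Bochner_Integration.integral_add Bochner_Integration.integral_diff
             Bochner_Integration.integrable_add Bochner_Integration.integrable_diff intE ig1 ig2 igs1 igs2)
      moreover have "ereal (integral\<^sup>L lborel L) \<le> a n" unfolding a_def
      proof (rule int_le_nn[OF iL])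
        fix x
        have qQ: "(\<rho>1s n x, \<rho>2s n x) \<in> quad" using ns by (auto simp: quad_def)
        show "0 \<le> \<Phi> (\<rho>1s n x, \<rho>2s n x)" using \<Phi>0 qQ by blast
        show "L x \<le> \<Phi> (\<rho>1s n x, \<rho>2s n x)"
        proof (cases "x \<in> E R")
          case True
          have pQ: "(\<rho>1 x, \<rho>2 x) \<in> quad" using n1 n2 by (auto simp: quad_def)
          have "L x = \<Phi> (\<rho>1 x, \<rho>2 x) + D1 (\<rho>1 x, \<rho>2 x) * (\<rho>1s n x - \<rho>1 x) + D2 (\<rho>1 x, \<rho>2 x) * (\<rho>2s n x - \<rho>2 x)"
            using True unfolding L_def g1_def g2_def by (simp add: right_diff_distrib mult.commute)
          also have "\<dots> \<le> \<Phi> (\<rho>1s n x, \<rho>2s n x)" using grad[rule_format, OF pQ qQ] by simp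
          finally show ?thesis .
        next
          case False
          then have "L x = 0" by (simp add: L_def g1_def g2_def)
          then show ?thesis using \<Phi>0 qQ by auto
        qed
      qed
      ultimately show ?thesis by simp
    qed
    show ?thesis using intE sle slim by blast
  qed
  have A: "(\<integral>\<^sup>+x. ennreal (\<Phi> (\<rho>1 x, \<rho>2 x)) \<partial>lborel) \<le> (SUP R. ennreal (c R))"
  proof -
    have "(\<integral>\<^sup>+x. ennreal (\<Phi> (\<rho>1 x, \<rho>2 x)) \<partial>lborel)
        \<le> (\<integral>\<^sup>+x. (SUP R. ennreal (indicator (E R) x * \<Phi> (\<rho>1 x, \<rho>2 x))) \<partial>lborel)"
    proof (rule nn_integral_mono)
      fix x :: 'a
      define R where "R = nat \<lceil>max (norm x) (max (\<rho>1 x) (\<rho>2 x))\<rceil>"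
      have "max (norm x) (max (\<rho>1 x) (\<rho>2 x)) \<le> real R" unfolding R_def by (rule real_nat_ceiling_ge)
      then have "x \<in> E R" by (auto simp: E_def)
      then have "ennreal (\<Phi> (\<rho>1 x, \<rho>2 x)) = ennreal (indicator (E R) x * \<Phi> (\<rho>1 x, \<rho>2 x))" by simp
      also have "\<dots> \<le> (SUP R. ennreal (indicator (E R) x * \<Phi> (\<rho>1 x, \<rho>2 x)))"
        by (rule SUP_upper) simp
      finally show "ennreal (\<Phi> (\<rho>1 x, \<rho>2 x)) \<le> (SUP R. ennreal (indicator (E R) x * \<Phi> (\<rho>1 x, \<rho>2 x)))" .

    qed
    also have "\<dots> = (SUP R. (\<integral>\<^sup>+x. ennreal (indicator (E R) x * \<Phi> (\<rho>1 x, \<rho>2 x)) \<partial>lborel))"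
    proof (rule nn_integral_monotone_convergence_SUP)
      show "incseq (\<lambda>R x. ennreal (indicator (E R) x * \<Phi> (\<rho>1 x, \<rho>2 x)))"
      proof (rule incseq_SucI, rule le_funI)
        fix R x
        have pQ: "(\<rho>1 x, \<rho>2 x) \<in> quad" using n1 n2 by (auto simp: quad_def)
        then have "0 \<le> \<Phi> (\<rho>1 x, \<rho>2 x)" using \<Phi>0 by blast
        moreover have "x \<in> E R \<Longrightarrow> x \<in> E (Suc R)" by (auto simp: E_def)
        ultimately show "ennreal (indicator (E R) x * \<Phi> (\<rho>1 x, \<rho>2 x)) \<le> ennreal (indicator (E (Suc R)) x * \<Phi> (\<rho>1 x, \<rho>2 x))"
        proof (cases "x \<in> E R")
          case True
          then have "x \<in> E (Suc R)" using \<open>x \<in> E R \<Longrightarrow> x \<in> E (Suc R)\<close> by blast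
          then show ?thesis using True by simp
        next
          case False
          then show ?thesis by simp
        qed
      qed
      show "(\<lambda>x. ennreal (indicator (E i) x * \<Phi> (\<rho>1 x, \<rho>2 x))) \<in> borel_measurable lborel" for i
        using mqE[OF c\<Phi>] by measurable
    qed
    also have "\<dots> = (SUP R. ennreal (c R))"
    proof (rule SUP_cong[OF refl])
      fix R
      have "AE x in lborel. 0 \<le> indicator (E R) x * \<Phi> (\<rho>1 x, \<rho>2 x)"
        using \<Phi>0 n1 n2 by (intro AE_I2) (auto simp: quad_def)
      then show "(\<integral>\<^sup>+x. ennreal (indicator (E R) x * \<Phi> (\<rho>1 x, \<rho>2 x)) \<partial>lborel) = ennreal (c R)"
        unfolding c_def using key[of R] by (intro nn_integral_eq_integral) auto
    qed
    finally show ?thesis .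
  qed
  have "enn2ereal (\<integral>\<^sup>+x. ennreal (\<Phi> (\<rho>1 x, \<rho>2 x)) \<partial>lborel) \<le> liminf a"
  proof (rule liminf_sup_approx[OF _ A])
    show "0 \<le> a n" for n unfolding a_def by simp
    show "\<exists>s. (\<forall>n. ereal (s n) \<le> a n) \<and> s \<longlonglongrightarrow> c R" for R using key[of R] by blast
  qed
  then show ?thesis unfolding a_def .
qed


lemma K_growth:
  fixes K :: "'a::euclidean_space \<Rightarrow> real"
  assumes hK: "hyp_K K"
  shows "continuous_on UNIV K" "\<forall>x. 0 \<le> K x" "\<exists>C. \<forall>z. K z \<le> C * (1 + (norm z)\<^sup>2)"
proof -
  obtain DK :: "'a \<Rightarrow> 'a" and HK :: "'a \<Rightarrow> ('a \<Rightarrow>\<^sub>L 'a)" and lam CK where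
    K0: "K 0 = 0" and Kn: "\<forall>x. 0 \<le> K x" and
    dK: "\<forall>x. (K has_derivative (\<lambda>v. DK x \<bullet> v)) (at x)" and
    dDK: "\<forall>x. (DK has_derivative blinfun_apply (HK x)) (at x)" and
    nrm: "\<forall>x. norm (HK x) \<le> CK"
    using hK unfolding hyp_K_def by blast
  show "continuous_on UNIV K"
    by (rule continuous_at_imp_continuous_on) (use dK has_derivative_continuous in blast)
  show "\<forall>x. 0 \<le> K x" by (rule Kn)
  have CK0: "0 \<le> CK" using nrm[rule_format, of 0] norm_ge_zero[of "HK 0"] by linarith
  have DKb: "norm (DK w - DK 0) \<le> CK * norm w" for w
  proof -
    have "norm (DK w - DK 0) \<le> CK * norm (w - 0)"
    proof (rule differentiable_bound[of UNIV DK "\<lambda>x. blinfun_apply (HK x)" CK w 0])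
      show "convex (UNIV :: 'a set)" by simp
      show "(DK has_derivative blinfun_apply (HK x)) (at x within UNIV)" for x using dDK by simp
      show "onorm (blinfun_apply (HK x)) \<le> CK" for x using nrm by (simp add: norm_blinfun.rep_eq[symmetric])
    qed auto
    then show ?thesis by simp
  qed
  have Kb: "K z \<le> norm (DK 0) * norm z + CK * (norm z)\<^sup>2" for z
  proof -
    define S where "S = cball (0::'a) (norm z)"
    define G where "G w = K w - DK 0 \<bullet> w" for w
    have "norm (G z - G 0) \<le> (CK * norm z) * norm (z - 0)"
    proof (rule differentiable_bound[of S G "\<lambda>w v. DK w \<bullet> v - DK 0 \<bullet> v" "CK * norm z" z 0])
      show "convex S" unfolding S_def by simp
      show "(G has_derivative (\<lambda>v. DK w \<bullet> v - DK 0 \<bullet> v)) (at w within S)" for w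
      proof -
        have a: "(K has_derivative (\<lambda>v. DK w \<bullet> v)) (at w within S)"
          using dK has_derivative_at_withinI by blast
        have b: "((\<lambda>w. DK 0 \<bullet> w) has_derivative (\<lambda>v. DK 0 \<bullet> v)) (at w within S)"
          by (intro bounded_linear_imp_has_derivative bounded_linear_inner_right)
        show ?thesis unfolding G_def by (rule has_derivative_diff[OF a b])
      qed
      show "onorm (\<lambda>v. DK w \<bullet> v - DK 0 \<bullet> v) \<le> CK * norm z" if "w \<in> S" for w
      proof (rule onorm_le)
        fix v
        have "norm (DK w \<bullet> v - DK 0 \<bullet> v) = \<bar>(DK w - DK 0) \<bullet> v\<bar>" by (simp add: inner_diff_left)
        also have "\<dots> \<le> norm (DK w - DK 0) * norm v" by (rule Cauchy_Schwarz_ineq2)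
        also have "\<dots> \<le> (CK * norm w) * norm v" using DKb[of w] by (intro mult_right_mono) auto
        also have "\<dots> \<le> (CK * norm z) * norm v" using that CK0 unfolding S_def
          by (intro mult_right_mono mult_left_mono) auto
        finally show "norm (DK w \<bullet> v - DK 0 \<bullet> v) \<le> CK * norm z * norm v" .
      qed
      show "z \<in> S" "0 \<in> S" unfolding S_def by auto
    qed
    then have "\<bar>K z - DK 0 \<bullet> z\<bar> \<le> CK * (norm z)\<^sup>2" unfolding G_def using K0 by (simp add: power2_eq_square)
    moreover have "DK 0 \<bullet> z \<le> norm (DK 0) * norm z"
      using Cauchy_Schwarz_ineq2[of "DK 0" z] by linarith
    ultimately show ?thesis by linarith
  qed
  show "\<exists>C. \<forall>z. K z \<le> C * (1 + (norm z)\<^sup>2)"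
  proof (intro exI allI)
    fix z :: 'a
    have nz: "norm z \<le> 1 + (norm z)\<^sup>2"
    proof (cases "norm z \<le> 1")
      case True then show ?thesis by (simp add: add_increasing2)
    next
      case False then have "norm z * 1 \<le> norm z * norm z" by (intro mult_left_mono) auto
      then show ?thesis by (simp add: power2_eq_square)
    qed
    have "norm (DK 0) * norm z \<le> norm (DK 0) * (1 + (norm z)\<^sup>2)" using nz by (simp add: mult_left_mono)
    moreover have "CK * (norm z)\<^sup>2 \<le> CK * (1 + (norm z)\<^sup>2)" using CK0 by (simp add: mult_left_mono)
    ultimately show "K z \<le> (norm (DK 0) + CK) * (1 + (norm z)\<^sup>2)"
      using Kb[of z] by (simp add: distrib_right)
  qed
qed


definition chi :: "nat \<Rightarrow> 'a::real_normed_vector \<Rightarrow> real" where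
  "chi R z = max 0 (min 1 (real R + 1 - norm z))"

definition KR :: "('a::real_normed_vector \<Rightarrow> real) \<Rightarrow> nat \<Rightarrow> 'a \<Rightarrow> real" where
  "KR K R z = K z * chi R z"

lemma chi_props:
  "0 \<le> chi R z" "chi R z \<le> 1" "chi R z \<le> chi (Suc R) z"
  "norm z \<le> real R \<Longrightarrow> chi R z = 1" "real R + 1 \<le> norm z \<Longrightarrow> chi R z = 0"
  by (auto simp: chi_def)

lemma KR_props:
  fixes K :: "'a::real_normed_vector \<Rightarrow> real"
  assumes K0: "\<forall>x. 0 \<le> K x"
  shows "0 \<le> KR K R z" "KR K R z \<le> K z" "KR K R z \<le> KR K (Suc R) z"
    "norm z \<le> real R \<Longrightarrow> KR K R z = K z" "real R + 1 \<le> norm z \<Longrightarrow> KR K R z = 0"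
proof -
  have k: "0 \<le> K z" using K0 by blast
  show "0 \<le> KR K R z" unfolding KR_def by (intro mult_nonneg_nonneg k chi_props(1))
  show "KR K R z \<le> K z" unfolding KR_def using k chi_props(2)[of R z] by (simp add: mult_left_le)
  show "KR K R z \<le> KR K (Suc R) z" unfolding KR_def using k chi_props(3)[of R z] by (simp add: mult_left_mono)
  show "norm z \<le> real R \<Longrightarrow> KR K R z = K z" unfolding KR_def using chi_props(4)[of z R] by simp
  show "real R + 1 \<le> norm z \<Longrightarrow> KR K R z = 0" unfolding KR_def using chi_props(5)[of R z] by simp
qed

lemma KR_lim:
  fixes K :: "'a::real_normed_vector \<Rightarrow> real"
  assumes K0: "\<forall>x. 0 \<le> K x"
  shows "(\<lambda>R. KR K R z) \<longlonglongrightarrow> K z"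
proof (rule tendsto_eventually)
  show "eventually (\<lambda>R. KR K R z = K z) sequentially"
    unfolding eventually_sequentially
  proof (intro exI allI impI)
    fix R assume "nat \<lceil>norm z\<rceil> \<le> R"
    then have "norm z \<le> real R" by linarith
    then show "KR K R z = K z" using KR_props(4)[OF K0] by blast
  qed
qed

lemma KR_cont:
  assumes Kc: "continuous_on UNIV K"
  shows "continuous_on UNIV (KR K R)"
  unfolding KR_def chi_def by (intro continuous_intros Kc)

lemma KR_bdd:
  fixes K :: "'a::euclidean_space \<Rightarrow> real"
  assumes Kc: "continuous_on UNIV K" and K0: "\<forall>x. 0 \<le> K x"
  shows "\<exists>M. \<forall>z. KR K R z \<le> M"
proof -
  have "compact (K ` cball 0 (real R + 1))"
    by (intro compact_continuous_image continuous_on_subset[OF Kc]) auto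
  then obtain M where M: "\<forall>z\<in>cball 0 (real R + 1). \<bar>K z\<bar> \<le> M"
    by (auto dest!: compact_imp_bounded simp: bounded_real)
  show ?thesis
  proof (intro exI allI)
    fix z :: 'a
    show "KR K R z \<le> max M 0"
    proof (cases "norm z \<le> real R + 1")
      case True
      then have "KR K R z \<le> K z" "\<bar>K z\<bar> \<le> M" using KR_props(2)[OF K0] M by auto
      then show ?thesis by linarith
    next
      case False then show ?thesis using KR_props(5)[OF K0, of R z] by simp
    qed
  qed
qed

lemma KR_unif:
  fixes K :: "'a::euclidean_space \<Rightarrow> real"
  assumes Kc: "continuous_on UNIV K" and K0: "\<forall>x. 0 \<le> K x" and e: "e > 0"
  shows "\<exists>d>0. \<forall>z z'. dist z z' < d \<longrightarrow> \<bar>KR K R z - KR K R z'\<bar> < e"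
proof -
  define S where "S = cball (0::'a) (real R + 2)"
  have "uniformly_continuous_on S (KR K R)"
    unfolding S_def by (intro compact_uniformly_continuous continuous_on_subset[OF KR_cont[OF Kc]]) auto
  then obtain d where d: "d > 0" "\<forall>x\<in>S. \<forall>x'\<in>S. dist x' x < d \<longrightarrow> dist (KR K R x') (KR K R x) < e"
    unfolding uniformly_continuous_on_def using e by blast
  show ?thesis
  proof (intro exI[of _ "min d 1"] conjI allI impI)
    show "0 < min d 1" using d by simp
    fix z z' :: 'a assume dz: "dist z z' < min d 1"
    show "\<bar>KR K R z - KR K R z'\<bar> < e"
    proof (cases "z \<in> S \<and> z' \<in> S")
      case True
      then show ?thesis using d(2) dz by (auto simp: dist_real_def dist_commute)
    next
      case False
      have tri: "norm z \<le> norm z' + dist z z'" "norm z' \<le> norm z + dist z z'"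
        by (metis dist_norm norm_triangle_sub add.commute)
           (metis dist_commute dist_norm norm_triangle_sub add.commute)
      from False have "norm z > real R + 2 \<or> norm z' > real R + 2" by (auto simp: S_def)
      then have "real R + 1 \<le> norm z \<and> real R + 1 \<le> norm z'" using tri dz by auto
      then show ?thesis using KR_props(5)[OF K0] e by simp
    qed
  qed
qed


definition psi :: "('a::euclidean_space \<Rightarrow> real) \<Rightarrow> ('a \<Rightarrow> real) \<Rightarrow> nat \<Rightarrow> 'a \<Rightarrow> real" where
  "psi K \<rho> R x = (\<integral>y. KR K R (x - y) * \<rho> y \<partial>lborel)"

definition dens :: "('a::euclidean_space \<Rightarrow> real) \<Rightarrow> bool" where
  "dens \<rho> \<longleftrightarrow> (\<forall>x. 0 \<le> \<rho> x) \<and> integrable lborel \<rho> \<and> (\<integral>x. \<rho> x \<partial>lborel) = 1"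

lemma KR_shift_meas:
  fixes K :: "'a::euclidean_space \<Rightarrow> real"
  assumes Kc: "continuous_on UNIV K"
  shows "(\<lambda>y. KR K R (x - y)) \<in> borel_measurable lborel"
  by (rule borel_measurable_continuous_on[OF KR_cont[OF Kc]]) simp

lemma KR_absbdd:
  fixes K :: "'a::euclidean_space \<Rightarrow> real"
  assumes Kc: "continuous_on UNIV K" and K0: "\<forall>x. 0 \<le> K x"
  obtains M where "\<forall>z. \<bar>KR K R z\<bar> \<le> M" "0 \<le> M"
proof -
  obtain M where M: "\<forall>z. KR K R z \<le> M" using KR_bdd[OF Kc K0] by blast
  have "0 \<le> M" using M KR_props(1)[OF K0, of R 0] by (meson order_trans)
  moreover have "\<forall>z. \<bar>KR K R z\<bar> \<le> M" using M KR_props(1)[OF K0] by (simp add: abs_of_nonneg)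
  ultimately show ?thesis using that by blast
qed

lemma psi_int:
  fixes K :: "'a::euclidean_space \<Rightarrow> real"
  assumes Kc: "continuous_on UNIV K" and K0: "\<forall>x. 0 \<le> K x" and i: "integrable lborel \<rho>"
  shows "integrable lborel (\<lambda>y. KR K R (x - y) * \<rho> y)"
proof -
  obtain M where M: "\<forall>z. \<bar>KR K R z\<bar> \<le> M" using KR_absbdd[OF Kc K0] by blast
  have "integrable lborel (\<lambda>y. \<rho> y * KR K R (x - y))"
    by (rule integrable_mult_bdd[OF i KR_shift_meas[OF Kc]]) (use M in blast)
  then show ?thesis by (simp add: mult.commute)
qed

lemma psi_bdd:
  fixes K :: "'a::euclidean_space \<Rightarrow> real"
  assumes Kc: "continuous_on UNIV K" and K0: "\<forall>x. 0 \<le> K x"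
  obtains M where "\<And>\<rho> x. dens \<rho> \<Longrightarrow> 0 \<le> psi K \<rho> R x \<and> psi K \<rho> R x \<le> M"
proof -
  obtain M where M: "\<forall>z. \<bar>KR K R z\<bar> \<le> M" "0 \<le> M" using KR_absbdd[OF Kc K0] by blast
  have "0 \<le> psi K \<rho> R x \<and> psi K \<rho> R x \<le> M" if d: "dens \<rho>" for \<rho> x
  proof
    have i: "integrable lborel \<rho>" and n: "\<forall>x. 0 \<le> \<rho> x" and one: "(\<integral>x. \<rho> x \<partial>lborel) = 1"
      using d by (auto simp: dens_def)
    show "0 \<le> psi K \<rho> R x" unfolding psi_def
      using KR_props(1)[OF K0] n by (intro integral_nonneg_AE AE_I2 mult_nonneg_nonneg) auto
    have "psi K \<rho> R x \<le> (\<integral>y. M * \<rho> y \<partial>lborel)" unfolding psi_def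
    proof (rule integral_mono)
      show "integrable lborel (\<lambda>y. KR K R (x - y) * \<rho> y)" by (rule psi_int[OF Kc K0 i])
      show "integrable lborel (\<lambda>y. M * \<rho> y)" using i by simp
      show "KR K R (x - y) * \<rho> y \<le> M * \<rho> y" for y
        using M n by (intro mult_right_mono) (auto simp: abs_le_iff)
    qed
    also have "\<dots> = M" using one by simp
    finally show "psi K \<rho> R x \<le> M" .
  qed
  then show ?thesis using that by blast
qed

lemma psi_mod:
  fixes K :: "'a::euclidean_space \<Rightarrow> real"
  assumes Kc: "continuous_on UNIV K" and K0: "\<forall>x. 0 \<le> K x"
    and d: "\<forall>z z'. dist z z' < d \<longrightarrow> \<bar>KR K R z - KR K R z'\<bar> < e"
    and \<rho>: "dens \<rho>" and xx: "dist x x' < d"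
  shows "\<bar>psi K \<rho> R x - psi K \<rho> R x'\<bar> \<le> e"
proof -
  have i: "integrable lborel \<rho>" and n: "\<forall>x. 0 \<le> \<rho> x" and one: "(\<integral>x. \<rho> x \<partial>lborel) = 1"
    using \<rho> by (auto simp: dens_def)
  have i1: "integrable lborel (\<lambda>y. KR K R (x - y) * \<rho> y)" by (rule psi_int[OF Kc K0 i])
  have i2: "integrable lborel (\<lambda>y. KR K R (x' - y) * \<rho> y)" by (rule psi_int[OF Kc K0 i])
  have "psi K \<rho> R x - psi K \<rho> R x' = (\<integral>y. KR K R (x - y) * \<rho> y - KR K R (x' - y) * \<rho> y \<partial>lborel)"
    unfolding psi_def using i1 i2 by (simp add: Bochner_Integration.integral_diff)
  also have "\<bar>\<dots>\<bar> \<le> (\<integral>y. \<bar>KR K R (x - y) * \<rho> y - KR K R (x' - y) * \<rho> y\<bar> \<partial>lborel)"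
    by (rule integral_abs_bound)
  also have "\<dots> \<le> (\<integral>y. e * \<rho> y \<partial>lborel)"
  proof (rule integral_mono)
    show "integrable lborel (\<lambda>y. \<bar>KR K R (x - y) * \<rho> y - KR K R (x' - y) * \<rho> y\<bar>)"
      using i1 i2 by (intro integrable_abs Bochner_Integration.integrable_diff)
    show "integrable lborel (\<lambda>y. e * \<rho> y)" using i by simp
    fix y
    have "dist (x - y) (x' - y) < d" using xx by (simp add: dist_norm)
    then have "\<bar>KR K R (x - y) - KR K R (x' - y)\<bar> < e" using d by blast
    then have "\<bar>KR K R (x - y) - KR K R (x' - y)\<bar> * \<rho> y \<le> e * \<rho> y"
      using n by (intro mult_right_mono) auto
    then show "\<bar>KR K R (x - y) * \<rho> y - KR K R (x' - y) * \<rho> y\<bar> \<le> e * \<rho> y"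
      using n by (simp add: left_diff_distrib[symmetric] abs_mult)
  qed
  also have "\<dots> = e" using one by simp
  finally show ?thesis .
qed

lemma psi_cont:
  fixes K :: "'a::euclidean_space \<Rightarrow> real"
  assumes Kc: "continuous_on UNIV K" and K0: "\<forall>x. 0 \<le> K x" and \<rho>: "dens \<rho>"
  shows "continuous_on UNIV (psi K \<rho> R)"
proof -
  have "uniformly_continuous_on UNIV (psi K \<rho> R)"
    unfolding uniformly_continuous_on_def
  proof (intro allI impI)
    fix e :: real assume e: "e > 0"
    obtain d where d: "d > 0" "\<forall>z z'. dist z z' < d \<longrightarrow> \<bar>KR K R z - KR K R z'\<bar> < e / 2"
      using KR_unif[OF Kc K0, of "e/2" R] e by auto
    show "\<exists>d>0. \<forall>x\<in>UNIV. \<forall>x'\<in>UNIV. dist x' x < d \<longrightarrow> dist (psi K \<rho> R x') (psi K \<rho> R x) < e"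
    proof (intro exI[of _ d] conjI ballI impI)
      fix x x' :: 'a assume "dist x' x < d"
      then have "\<bar>psi K \<rho> R x' - psi K \<rho> R x\<bar> \<le> e / 2" by (rule psi_mod[OF Kc K0 d(2) \<rho>])
      then show "dist (psi K \<rho> R x') (psi K \<rho> R x) < e" using e by (simp add: dist_real_def)
    qed (use d in auto)
  qed
  then show ?thesis by (rule uniformly_continuous_imp_continuous)
qed

lemma psi_mono:
  fixes K :: "'a::euclidean_space \<Rightarrow> real"
  assumes Kc: "continuous_on UNIV K" and K0: "\<forall>x. 0 \<le> K x" and \<rho>: "dens \<rho>"
  shows "psi K \<rho> R x \<le> psi K \<rho> (Suc R) x"
  unfolding psi_def
proof (rule integral_mono)
  have i: "integrable lborel \<rho>" and n: "\<forall>x. 0 \<le> \<rho> x" using \<rho> by (auto simp: dens_def)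
  show "integrable lborel (\<lambda>y. KR K R (x - y) * \<rho> y)" by (rule psi_int[OF Kc K0 i])
  show "integrable lborel (\<lambda>y. KR K (Suc R) (x - y) * \<rho> y)" by (rule psi_int[OF Kc K0 i])
  show "KR K R (x - y) * \<rho> y \<le> KR K (Suc R) (x - y) * \<rho> y" for y
    using KR_props(3)[OF K0] n by (intro mult_right_mono) auto
qed

lemma psi_le_conv:
  fixes K :: "'a::euclidean_space \<Rightarrow> real"
  assumes Kc: "continuous_on UNIV K" and K0: "\<forall>x. 0 \<le> K x" and \<rho>: "dens \<rho>"
    and ik: "integrable lborel (\<lambda>y. K (x - y) * \<rho> y)"
  shows "psi K \<rho> R x \<le> conv K \<rho> x"
  unfolding psi_def conv_def
proof (rule integral_mono[OF _ ik])
  have i: "integrable lborel \<rho>" and n: "\<forall>x. 0 \<le> \<rho> x" using \<rho> by (auto simp: dens_def)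
  show "integrable lborel (\<lambda>y. KR K R (x - y) * \<rho> y)" by (rule psi_int[OF Kc K0 i])
  show "KR K R (x - y) * \<rho> y \<le> K (x - y) * \<rho> y" for y
    using KR_props(2)[OF K0] n by (intro mult_right_mono) auto
qed

lemma psi_lim:
  fixes K :: "'a::euclidean_space \<Rightarrow> real"
  assumes Kc: "continuous_on UNIV K" and K0: "\<forall>x. 0 \<le> K x" and \<rho>: "dens \<rho>"
    and ik: "integrable lborel (\<lambda>y. K (x - y) * \<rho> y)"
  shows "(\<lambda>R. psi K \<rho> R x) \<longlonglongrightarrow> conv K \<rho> x"
  unfolding psi_def conv_def
proof (rule integral_dominated_convergence[where w="\<lambda>y. K (x - y) * \<rho> y"])
  have i: "integrable lborel \<rho>" and n: "\<forall>x. 0 \<le> \<rho> x" using \<rho> by (auto simp: dens_def)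
  show "(\<lambda>y. K (x - y) * \<rho> y) \<in> borel_measurable lborel" using ik by (rule borel_measurable_integrable)
  show "(\<lambda>y. KR K R (x - y) * \<rho> y) \<in> borel_measurable lborel" for R
    using psi_int[OF Kc K0 i] by (rule borel_measurable_integrable)
  show "integrable lborel (\<lambda>y. K (x - y) * \<rho> y)" by (rule ik)
  show "AE y in lborel. (\<lambda>R. KR K R (x - y) * \<rho> y) \<longlonglongrightarrow> K (x - y) * \<rho> y"
    by (intro AE_I2 tendsto_mult KR_lim[OF K0] tendsto_const)
  show "AE y in lborel. norm (KR K R (x - y) * \<rho> y) \<le> K (x - y) * \<rho> y" for R
    using KR_props(1,2)[OF K0] n by (intro AE_I2) (auto simp: abs_mult intro!: mult_right_mono)
qed

lemma conv_meas:
  fixes K :: "'a::euclidean_space \<Rightarrow> real"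
  assumes Kc: "continuous_on UNIV K" and K0: "\<forall>x. 0 \<le> K x" and \<rho>: "dens \<rho>"
    and ik: "\<forall>x. integrable lborel (\<lambda>y. K (x - y) * \<rho> y)"
  shows "conv K \<rho> \<in> borel_measurable lborel"
proof (rule borel_measurable_LIMSEQ_real[where u="\<lambda>R. psi K \<rho> R"])
  show "(\<lambda>R. psi K \<rho> R x) \<longlonglongrightarrow> conv K \<rho> x" for x using psi_lim[OF Kc K0 \<rho>] ik by blast
  show "psi K \<rho> R \<in> borel_measurable lborel" for R
    using borel_measurable_continuous_onI[OF psi_cont[OF Kc K0 \<rho>]] by simp
qed

lemma conv_nonneg:
  fixes K :: "'a::euclidean_space \<Rightarrow> real"
  assumes K0: "\<forall>x. 0 \<le> K x" and \<rho>: "dens \<rho>"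
  shows "0 \<le> conv K \<rho> x"
  unfolding conv_def using K0 \<rho> by (intro integral_nonneg_AE AE_I2 mult_nonneg_nonneg) (auto simp: dens_def)

lemma psi_weak:
  fixes K :: "'a::euclidean_space \<Rightarrow> real"
  assumes Kc: "continuous_on UNIV K" and K0: "\<forall>x. 0 \<le> K x" and w: "weakL1_conv \<rho>s \<rho>"
  shows "(\<lambda>n. psi K (\<rho>s n) R x) \<longlonglongrightarrow> psi K \<rho> R x"
proof -
  obtain M where M: "\<forall>z. \<bar>KR K R z\<bar> \<le> M" using KR_absbdd[OF Kc K0] by blast
  have "bounded (range (\<lambda>y. KR K R (x - y)))" using M by (auto simp: bounded_real)
  then have "(\<lambda>n. \<integral>y. \<rho>s n y * KR K R (x - y) \<partial>lborel) \<longlonglongrightarrow> (\<integral>y. \<rho> y * KR K R (x - y) \<partial>lborel)"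
    using w KR_shift_meas[OF Kc] unfolding weakL1_conv_def by blast
  then show ?thesis unfolding psi_def by (simp add: mult.commute)
qed


lemma unif_compact:
  fixes f :: "nat \<Rightarrow> 'a::metric_space \<Rightarrow> real" and g :: "'a \<Rightarrow> real"
  assumes S: "compact S"
    and eqf: "\<And>e. e > 0 \<Longrightarrow> \<exists>d>0. \<forall>n x y. dist x y < d \<longrightarrow> \<bar>f n x - f n y\<bar> \<le> e"
    and eqg: "\<And>e. e > 0 \<Longrightarrow> \<exists>d>0. \<forall>x y. dist x y < d \<longrightarrow> \<bar>g x - g y\<bar> \<le> e"
    and lim: "\<And>x. (\<lambda>n. f n x) \<longlonglongrightarrow> g x"
    and e: "e > 0"
  shows "eventually (\<lambda>n. \<forall>x\<in>S. \<bar>f n x - g x\<bar> \<le> 3 * e) sequentially"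
proof -
  obtain d1 where d1: "d1 > 0" "\<forall>n x y. dist x y < d1 \<longrightarrow> \<bar>f n x - f n y\<bar> \<le> e" using eqf[OF e] by blast
  obtain d2 where d2: "d2 > 0" "\<forall>x y. dist x y < d2 \<longrightarrow> \<bar>g x - g y\<bar> \<le> e" using eqg[OF e] by blast
  define d where "d = min d1 d2"
  have d: "d > 0" using d1 d2 by (simp add: d_def)
  have cov: "S \<subseteq> \<Union>((\<lambda>c. ball c d) ` S)" using d by auto
  obtain C where C: "C \<subseteq> S" "finite C" "S \<subseteq> \<Union>((\<lambda>c. ball c d) ` C)"
    using compactE_image[OF S _ cov] by blast
  have "\<forall>c\<in>C. eventually (\<lambda>n. dist (f n c) (g c) < e) sequentially"
    using lim e by (intro ballI tendstoD) auto
  then have ev: "eventually (\<lambda>n. \<forall>c\<in>C. dist (f n c) (g c) < e) sequentially"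
    using C(2) by (intro eventually_ball_finite) auto
  show ?thesis
  proof (rule eventually_mono[OF ev], intro ballI)
    fix n x assume H: "\<forall>c\<in>C. dist (f n c) (g c) < e" and x: "x \<in> S"
    then obtain c where c: "c \<in> C" "dist c x < d" using C(3) by auto
    have a: "\<bar>f n x - f n c\<bar> \<le> e" using d1(2) c(2) by (simp add: d_def dist_commute)
    have b: "\<bar>f n c - g c\<bar> \<le> e" using H c(1) by (simp add: dist_real_def less_imp_le)
    have cc: "\<bar>g c - g x\<bar> \<le> e" using d2(2) c(2) by (simp add: d_def)
    show "\<bar>f n x - g x\<bar> \<le> 3 * e" using a b cc by linarith
  qed
qed

lemma tail_small:
  fixes \<rho> :: "'a::euclidean_space \<Rightarrow> real"
  assumes i: "integrable lborel \<rho>" and n: "\<forall>x. 0 \<le> \<rho> x" and e: "e > 0"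
  shows "\<exists>N::nat. (\<integral>x. \<rho> x * indicator (- cball 0 (real N)) x \<partial>lborel) < e"
proof -
  have "(\<lambda>N::nat. \<integral>x. \<rho> x * indicator (- cball 0 (real N)) x \<partial>lborel) \<longlonglongrightarrow> (integral\<^sup>L (lborel::'a measure) (\<lambda>x. 0))"
  proof (rule integral_dominated_convergence[where w=\<rho> and M=lborel and s="\<lambda>N x. \<rho> x * indicator (- cball 0 (real N)) x" and f="\<lambda>x. 0"])
    show "(\<lambda>x. 0::real) \<in> borel_measurable lborel" by simp
    show "(\<lambda>x. \<rho> x * indicator (- cball 0 (real N)) x) \<in> borel_measurable lborel" for N
    proof -
      have "(\<lambda>x. indicator (- cball 0 (real N)) x :: real) \<in> borel_measurable lborel"
        by (intro borel_measurable_indicator) simp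
      then show ?thesis using borel_measurable_integrable[OF i] by (intro borel_measurable_times)
    qed
    show "integrable lborel \<rho>" by (rule i)
    show "AE x in lborel. (\<lambda>N. \<rho> x * indicator (- cball 0 (real N)) x) \<longlonglongrightarrow> 0"
    proof (intro AE_I2 tendsto_eventually)
      fix x :: 'a
      show "eventually (\<lambda>N. \<rho> x * indicator (- cball 0 (real N)) x = 0) sequentially"
        unfolding eventually_sequentially
      proof (intro exI[of _ "nat \<lceil>norm x\<rceil>"] allI impI)
        fix N assume "nat \<lceil>norm x\<rceil> \<le> N"
        then have "norm x \<le> real N" by linarith
        then show "\<rho> x * indicator (- cball 0 (real N)) x = 0" by (simp add: indicator_def)
      qed
    qed
    show "AE x in lborel. norm (\<rho> x * indicator (- cball 0 (real N)) x) \<le> \<rho> x" for N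
    proof (intro AE_I2)
      fix x :: 'a
      show "norm (\<rho> x * indicator (- cball 0 (real N)) x) \<le> \<rho> x"
        using n by (cases "x \<in> - cball 0 (real N)") auto
    qed
  qed
  then have "eventually (\<lambda>N::nat. dist (\<integral>x. \<rho> x * indicator (- cball 0 (real N)) x \<partial>lborel) 0 < e) sequentially"
    using e by (intro tendstoD) auto
  then obtain N0 where "\<forall>N\<ge>N0. dist (\<integral>x. \<rho> x * indicator (- cball 0 (real N)) x \<partial>lborel) 0 < e"
    unfolding eventually_sequentially by blast
  then have "dist (\<integral>x. \<rho> x * indicator (- cball 0 (real N0)) x \<partial>lborel) 0 < e" by blast
  then show ?thesis by (intro exI[of _ N0]) (auto simp: dist_real_def)
qed


lemma bilin_conv:
  fixes \<psi>s :: "nat \<Rightarrow> 'a::euclidean_space \<Rightarrow> real" and \<psi> \<rho> :: "'a \<Rightarrow> real" and \<rho>s :: "nat \<Rightarrow> 'a \<Rightarrow> real"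
  assumes bs: "\<And>n x. \<bar>\<psi>s n x\<bar> \<le> M" and b: "\<And>x. \<bar>\<psi> x\<bar> \<le> M"
    and eqf: "\<And>e. e > 0 \<Longrightarrow> \<exists>d>0. \<forall>n x y. dist x y < d \<longrightarrow> \<bar>\<psi>s n x - \<psi>s n y\<bar> \<le> e"
    and eqg: "\<And>e. e > 0 \<Longrightarrow> \<exists>d>0. \<forall>x y. dist x y < d \<longrightarrow> \<bar>\<psi> x - \<psi> y\<bar> \<le> e"
    and lim: "\<And>x. (\<lambda>n. \<psi>s n x) \<longlonglongrightarrow> \<psi> x"
    and ms: "\<And>n. \<psi>s n \<in> borel_measurable lborel" and m: "\<psi> \<in> borel_measurable lborel"
    and dss: "\<And>n. dens (\<rho>s n)" and ds: "dens \<rho>"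
    and w: "weakL1_conv \<rho>s \<rho>"
  shows "(\<lambda>n. \<integral>x. \<rho>s n x * \<psi>s n x \<partial>lborel) \<longlonglongrightarrow> (\<integral>x. \<rho> x * \<psi> x \<partial>lborel)"
proof -
  have M0: "0 \<le> M" using b[of 0] by linarith
  have iss: "integrable lborel (\<rho>s n)" and ns: "\<forall>x. 0 \<le> \<rho>s n x" and ones: "(\<integral>x. \<rho>s n x \<partial>lborel) = 1" for n
    using dss[of n] by (auto simp: dens_def)
  have i: "integrable lborel \<rho>" and n: "\<forall>x. 0 \<le> \<rho> x" using ds by (auto simp: dens_def)
  have bdd\<psi>: "bounded (range \<psi>)" using b by (auto simp: bounded_real)
  have T2: "(\<lambda>n. \<integral>x. \<rho>s n x * \<psi> x \<partial>lborel) \<longlonglongrightarrow> (\<integral>x. \<rho> x * \<psi> x \<partial>lborel)"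
    using w m bdd\<psi> unfolding weakL1_conv_def by blast
  have ii1: "integrable lborel (\<lambda>x. \<rho>s n x * \<psi>s n x)" for n by (rule integrable_mult_bdd[OF iss ms bs])
  have ii2: "integrable lborel (\<lambda>x. \<rho>s n x * \<psi> x)" for n by (rule integrable_mult_bdd[OF iss m b])
  define T1 where "T1 n = (\<integral>x. \<rho>s n x * \<psi>s n x \<partial>lborel) - (\<integral>x. \<rho>s n x * \<psi> x \<partial>lborel)" for n
  have T1: "T1 \<longlonglongrightarrow> 0"
  proof (rule tendstoI)
    fix \<epsilon> :: real assume \<epsilon>: "\<epsilon> > 0"
    define e where "e = \<epsilon> / (4 + 2 * M)"
    have e: "e > 0" using \<epsilon> M0 by (simp add: e_def)
    have e\<epsilon>: "3 * e + 2 * M * e < \<epsilon>"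
    proof -
      have "(3 + 2 * M) * e < (4 + 2 * M) * e" using e by simp
      also have "\<dots> = \<epsilon>" using M0 by (simp add: e_def)
      finally show ?thesis by (simp add: algebra_simps)
    qed
    obtain N :: nat where N: "(\<integral>x. \<rho> x * indicator (- cball 0 (real N)) x \<partial>lborel) < e"
      using tail_small[OF i n e] by blast
    define C where "C = - cball (0::'a) (real N)"
    have Cm: "(\<lambda>x. indicator C x :: real) \<in> borel_measurable lborel"
      unfolding C_def by (intro borel_measurable_indicator) simp
    have Cb: "bounded (range (\<lambda>x. indicator C x :: real))" by (auto simp: bounded_real indicator_def)
    have "(\<lambda>n. \<integral>x. \<rho>s n x * indicator C x \<partial>lborel) \<longlonglongrightarrow> (\<integral>x. \<rho> x * indicator C x \<partial>lborel)"
      using w Cm Cb unfolding weakL1_conv_def by blast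
    then have ev1: "eventually (\<lambda>n. (\<integral>x. \<rho>s n x * indicator C x \<partial>lborel) < e) sequentially"
      using N unfolding C_def by (intro order_tendstoD(2)) auto
    have ev2: "eventually (\<lambda>n. \<forall>x\<in>cball 0 (real N). \<bar>\<psi>s n x - \<psi> x\<bar> \<le> 3 * e) sequentially"
      by (rule unif_compact[OF compact_cball eqf eqg lim e])
    show "eventually (\<lambda>n. dist (T1 n) 0 < \<epsilon>) sequentially"
    proof (rule eventually_mono[OF eventually_conj[OF ev1 ev2]])
      fix k assume H: "(\<integral>x. \<rho>s k x * indicator C x \<partial>lborel) < e \<and>
          (\<forall>x\<in>cball 0 (real N). \<bar>\<psi>s k x - \<psi> x\<bar> \<le> 3 * e)"
      have iC: "integrable lborel (\<lambda>x. \<rho>s k x * indicator C x)"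
        using integrable_mult_bdd[OF iss Cm, of 1 k] by (auto simp: indicator_def)
      have "T1 k = (\<integral>x. \<rho>s k x * \<psi>s k x - \<rho>s k x * \<psi> x \<partial>lborel)"
        unfolding T1_def using ii1 ii2 by (simp add: Bochner_Integration.integral_diff)
      then have "\<bar>T1 k\<bar> \<le> (\<integral>x. \<bar>\<rho>s k x * \<psi>s k x - \<rho>s k x * \<psi> x\<bar> \<partial>lborel)"
        by (simp add: integral_abs_bound)
      also have "\<dots> \<le> (\<integral>x. 3 * e * \<rho>s k x + 2 * M * (\<rho>s k x * indicator C x) \<partial>lborel)"
      proof (rule integral_mono)
        show "integrable lborel (\<lambda>x. \<bar>\<rho>s k x * \<psi>s k x - \<rho>s k x * \<psi> x\<bar>)"
          using ii1 ii2 by (intro integrable_abs Bochner_Integration.integrable_diff)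
        show "integrable lborel (\<lambda>x. 3 * e * \<rho>s k x + 2 * M * (\<rho>s k x * indicator C x))"
          using iss iC by (intro Bochner_Integration.integrable_add integrable_mult_right) auto
        fix x
        have r0: "0 \<le> \<rho>s k x" using ns by blast
        have eq: "\<bar>\<rho>s k x * \<psi>s k x - \<rho>s k x * \<psi> x\<bar> = \<rho>s k x * \<bar>\<psi>s k x - \<psi> x\<bar>"
          using r0 by (simp add: right_diff_distrib[symmetric] abs_mult)
        show "\<bar>\<rho>s k x * \<psi>s k x - \<rho>s k x * \<psi> x\<bar> \<le> 3 * e * \<rho>s k x + 2 * M * (\<rho>s k x * indicator C x)"
        proof (cases "x \<in> C")
          case True
          have "\<bar>\<psi>s k x - \<psi> x\<bar> \<le> 2 * M" using bs[of k x] b[of x] by linarith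
          then have "\<rho>s k x * \<bar>\<psi>s k x - \<psi> x\<bar> \<le> \<rho>s k x * (2 * M)" using r0 by (rule mult_left_mono)
          moreover have "0 \<le> 3 * e * \<rho>s k x" using e r0 by simp
          ultimately show ?thesis using True eq by (simp add: algebra_simps)
        next
          case False
          then have "x \<in> cball 0 (real N)" by (simp add: C_def)
          then have "\<bar>\<psi>s k x - \<psi> x\<bar> \<le> 3 * e" using H by blast
          then have "\<rho>s k x * \<bar>\<psi>s k x - \<psi> x\<bar> \<le> \<rho>s k x * (3 * e)" using r0 by (rule mult_left_mono)
          then show ?thesis using False eq by (simp add: algebra_simps)
        qed
      qed
      also have "\<dots> = 3 * e * (\<integral>x. \<rho>s k x \<partial>lborel) + 2 * M * (\<integral>x. \<rho>s k x * indicator C x \<partial>lborel)"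
        using iss iC by (simp add: Bochner_Integration.integral_add)
      also have "\<dots> \<le> 3 * e + 2 * M * e"
        using H ones[of k] M0 by (simp add: mult_left_mono less_imp_le)
      finally show "dist (T1 k) 0 < \<epsilon>" using e\<epsilon> by (simp add: dist_real_def)
    qed
  qed
  have "(\<lambda>n. T1 n + (\<integral>x. \<rho>s n x * \<psi> x \<partial>lborel)) \<longlonglongrightarrow> 0 + (\<integral>x. \<rho> x * \<psi> x \<partial>lborel)"
    by (intro tendsto_add T1 T2)
  then show ?thesis by (simp add: T1_def)
qed


lemma inter_lsc:
  fixes K :: "'a::euclidean_space \<Rightarrow> real" and \<rho>1 \<rho>2 :: "'a \<Rightarrow> real" and \<rho>1s \<rho>2s :: "nat \<Rightarrow> 'a \<Rightarrow> real"
  assumes Kc: "continuous_on UNIV K" and K0: "\<forall>x. 0 \<le> K x"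
    and d1: "dens \<rho>1" and d2: "dens \<rho>2" and ds: "\<forall>n. dens (\<rho>1s n) \<and> dens (\<rho>2s n)"
    and ik: "\<forall>x. integrable lborel (\<lambda>y. K (x - y) * \<rho>2 y)"
    and iks: "\<forall>n x. integrable lborel (\<lambda>y. K (x - y) * \<rho>2s n y)"
    and w1: "weakL1_conv \<rho>1s \<rho>1" and w2: "weakL1_conv \<rho>2s \<rho>2"
  shows "enn2ereal (\<integral>\<^sup>+x. ennreal (\<rho>1 x * conv K \<rho>2 x) \<partial>lborel)
     \<le> liminf (\<lambda>n. enn2ereal (\<integral>\<^sup>+x. ennreal (\<rho>1s n x * conv K (\<rho>2s n) x) \<partial>lborel))"
proof -
  have i1: "integrable lborel \<rho>1" and n1: "\<forall>x. 0 \<le> \<rho>1 x" using d1 by (auto simp: dens_def)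
  have i1s: "integrable lborel (\<rho>1s n)" and n1s: "\<forall>x. 0 \<le> \<rho>1s n x" for n
    using ds by (auto simp: dens_def)
  have d1s: "dens (\<rho>1s n)" and d2s: "dens (\<rho>2s n)" for n using ds by auto
  have m1[measurable]: "\<rho>1 \<in> borel_measurable lborel" using i1 by (rule borel_measurable_integrable)
  have mpsi[measurable]: "psi K \<rho> R \<in> borel_measurable lborel" if "dens \<rho>" for \<rho> R
    using borel_measurable_continuous_onI[OF psi_cont[OF Kc K0 that]] by simp
  define c where "c R = (\<integral>x. \<rho>1 x * psi K \<rho>2 R x \<partial>lborel)" for R
  define a where "a n = enn2ereal (\<integral>\<^sup>+x. ennreal (\<rho>1s n x * conv K (\<rho>2s n) x) \<partial>lborel)" for n
  have key: "integrable lborel (\<lambda>x. \<rho>1 x * psi K \<rho>2 R x) \<and>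
      (\<exists>s. (\<forall>n. ereal (s n) \<le> a n) \<and> s \<longlonglongrightarrow> c R)" for R
  proof -
    obtain M where M: "\<And>\<rho> x. dens \<rho> \<Longrightarrow> 0 \<le> psi K \<rho> R x \<and> psi K \<rho> R x \<le> M"
      using psi_bdd[OF Kc K0] by blast
    have Ma: "\<bar>psi K \<rho> R x\<bar> \<le> M" if "dens \<rho>" for \<rho> x using M[OF that, of x] by simp
    have ic: "integrable lborel (\<lambda>x. \<rho>1 x * psi K \<rho>2 R x)"
      by (rule integrable_mult_bdd[OF i1 mpsi[OF d2] Ma[OF d2]])
    define s where "s n = (\<integral>x. \<rho>1s n x * psi K (\<rho>2s n) R x \<partial>lborel)" for n
    have slim: "s \<longlonglongrightarrow> c R" unfolding s_def c_def
    proof (rule bilin_conv[where M=M])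
      show "\<bar>psi K (\<rho>2s n) R x\<bar> \<le> M" for n x by (rule Ma[OF d2s])
      show "\<bar>psi K \<rho>2 R x\<bar> \<le> M" for x by (rule Ma[OF d2])
      show "\<exists>d>0. \<forall>n x y. dist x y < d \<longrightarrow> \<bar>psi K (\<rho>2s n) R x - psi K (\<rho>2s n) R y\<bar> \<le> e"
        if e: "e > 0" for e
      proof -
        obtain d where d: "d > 0" "\<forall>z z'. dist z z' < d \<longrightarrow> \<bar>KR K R z - KR K R z'\<bar> < e"
          using KR_unif[OF Kc K0 e] by blast
        show ?thesis using psi_mod[OF Kc K0 d(2) d2s] d(1) by blast
      qed
      show "\<exists>d>0. \<forall>x y. dist x y < d \<longrightarrow> \<bar>psi K \<rho>2 R x - psi K \<rho>2 R y\<bar> \<le> e"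
        if e: "e > 0" for e
      proof -
        obtain d where d: "d > 0" "\<forall>z z'. dist z z' < d \<longrightarrow> \<bar>KR K R z - KR K R z'\<bar> < e"
          using KR_unif[OF Kc K0 e] by blast
        show ?thesis using psi_mod[OF Kc K0 d(2) d2] d(1) by blast
      qed
      show "(\<lambda>n. psi K (\<rho>2s n) R x) \<longlonglongrightarrow> psi K \<rho>2 R x" for x by (rule psi_weak[OF Kc K0 w2])
      show "psi K (\<rho>2s n) R \<in> borel_measurable lborel" for n by (rule mpsi[OF d2s])
      show "psi K \<rho>2 R \<in> borel_measurable lborel" by (rule mpsi[OF d2])
      show "dens (\<rho>1s n)" for n by (rule d1s)
      show "dens \<rho>1" by (rule d1)
      show "weakL1_conv \<rho>1s \<rho>1" by (rule w1)
    qed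
    have sle: "ereal (s n) \<le> a n" for n
      unfolding s_def a_def
    proof (rule int_le_nn)
      show "integrable lborel (\<lambda>x. \<rho>1s n x * psi K (\<rho>2s n) R x)"
        by (rule integrable_mult_bdd[OF i1s mpsi[OF d2s] Ma[OF d2s]])
      fix x
      show "\<rho>1s n x * psi K (\<rho>2s n) R x \<le> \<rho>1s n x * conv K (\<rho>2s n) x"
        using psi_le_conv[OF Kc K0 d2s] iks n1s by (intro mult_left_mono) auto
      show "0 \<le> \<rho>1s n x * conv K (\<rho>2s n) x"
        using conv_nonneg[OF K0 d2s] n1s by (intro mult_nonneg_nonneg) auto
    qed
    show ?thesis using ic sle slim by blast
  qed
  have A: "(\<integral>\<^sup>+x. ennreal (\<rho>1 x * conv K \<rho>2 x) \<partial>lborel) \<le> (SUP R. ennreal (c R))"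
  proof -
    have "(\<integral>\<^sup>+x. ennreal (\<rho>1 x * conv K \<rho>2 x) \<partial>lborel)
        \<le> (\<integral>\<^sup>+x. (SUP R. ennreal (\<rho>1 x * psi K \<rho>2 R x)) \<partial>lborel)"
    proof (rule nn_integral_mono)
      fix x :: 'a
      have "(\<lambda>R. \<rho>1 x * psi K \<rho>2 R x) \<longlonglongrightarrow> \<rho>1 x * conv K \<rho>2 x"
        using psi_lim[OF Kc K0 d2] ik by (intro tendsto_mult tendsto_const) auto
      then have "(\<lambda>R. ennreal (\<rho>1 x * psi K \<rho>2 R x)) \<longlonglongrightarrow> ennreal (\<rho>1 x * conv K \<rho>2 x)"
        by (rule tendsto_ennrealI)
      then show "ennreal (\<rho>1 x * conv K \<rho>2 x) \<le> (SUP R. ennreal (\<rho>1 x * psi K \<rho>2 R x))"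
        by (rule LIMSEQ_le_const2) (intro exI allI impI SUP_upper UNIV_I)
    qed
    also have "\<dots> = (SUP R. (\<integral>\<^sup>+x. ennreal (\<rho>1 x * psi K \<rho>2 R x) \<partial>lborel))"
    proof (rule nn_integral_monotone_convergence_SUP)
      show "incseq (\<lambda>R x. ennreal (\<rho>1 x * psi K \<rho>2 R x))"
      proof (rule incseq_SucI, rule le_funI)
        fix R x
        show "ennreal (\<rho>1 x * psi K \<rho>2 R x) \<le> ennreal (\<rho>1 x * psi K \<rho>2 (Suc R) x)"
          using psi_mono[OF Kc K0 d2] n1 by (intro ennreal_leI mult_left_mono) auto
      qed
      show "(\<lambda>x. ennreal (\<rho>1 x * psi K \<rho>2 i x)) \<in> borel_measurable lborel" for i
        using mpsi[OF d2] by measurable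
    qed
    also have "\<dots> = (SUP R. ennreal (c R))"
    proof (rule SUP_cong[OF refl])
      fix R
      have "AE x in lborel. 0 \<le> \<rho>1 x * psi K \<rho>2 R x"
      proof (intro AE_I2 mult_nonneg_nonneg)
        fix x
        show "0 \<le> \<rho>1 x" using n1 by blast
        have "0 \<le> KR K R z" for z by (rule KR_props(1)[OF K0])
        then show "0 \<le> psi K \<rho>2 R x" unfolding psi_def using d2
          by (intro integral_nonneg_AE AE_I2 mult_nonneg_nonneg) (auto simp: dens_def)
      qed
      then show "(\<integral>\<^sup>+x. ennreal (\<rho>1 x * psi K \<rho>2 R x) \<partial>lborel) = ennreal (c R)"
        unfolding c_def using key[of R] by (intro nn_integral_eq_integral) auto
    qed
    finally show ?thesis .
  qed
  have "enn2ereal (\<integral>\<^sup>+x. ennreal (\<rho>1 x * conv K \<rho>2 x) \<partial>lborel) \<le> liminf a"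
  proof (rule liminf_sup_approx[OF _ A])
    show "0 \<le> a n" for n unfolding a_def by simp
    show "\<exists>s. (\<forall>n. ereal (s n) \<le> a n) \<and> s \<longlonglongrightarrow> c R" for R using key[of R] by blast
  qed
  then show ?thesis unfolding a_def .
qed


lemma quad_eq: "quad = {0..} \<times> {0..}" by (auto simp: quad_def)

lemma convex_quad: "convex quad" unfolding quad_eq by (intro convex_Times convex_real_interval)

lemma hypF_cont:
  assumes "hyp_F F dF ddF"
  shows "continuous_on {0..} F" "continuous_on {0..} dF"
proof -
  have dF: "\<forall>r\<ge>0. (F has_real_derivative dF r) (at r within {0..})"
    and ddF: "\<forall>r\<ge>0. (dF has_real_derivative ddF r) (at r within {0..})"
    using assms unfolding hyp_F_def by auto
  show "continuous_on {0..} F"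
    using dF by (metis DERIV_continuous atLeast_iff continuous_on_eq_continuous_within)
  show "continuous_on {0..} dF"
    using ddF by (metis DERIV_continuous atLeast_iff continuous_on_eq_continuous_within)
qed

lemma cont_fst_quad:
  assumes "continuous_on {0..} f"
  shows "continuous_on quad (\<lambda>p. f (fst p))"
  by (rule continuous_on_compose2[OF assms continuous_on_fst[OF continuous_on_id]]) (auto simp: quad_def)

lemma cont_snd_quad:
  assumes "continuous_on {0..} f"
  shows "continuous_on quad (\<lambda>p. f (snd p))"
  by (rule continuous_on_compose2[OF assms continuous_on_snd[OF continuous_on_id]]) (auto simp: quad_def)

lemma hyph_cont:
  assumes "hyp_h h dh ddh"
  shows "continuous_on quad h" "continuous_on quad (dh 1)" "continuous_on quad (dh 2)"
proof -
  have d: "\<forall>p\<in>quad. (h has_derivative (\<lambda>v. dh 1 p * fst v + dh 2 p * snd v)) (at p within quad)"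
    and dd: "\<forall>k\<in>{1,2}. \<forall>p\<in>quad.
        (dh k has_derivative (\<lambda>v. ddh k 1 p * fst v + ddh k 2 p * snd v)) (at p within quad)"
    using assms unfolding hyp_h_def by auto
  show "continuous_on quad h"
    using d by (meson continuous_on_eq_continuous_within has_derivative_continuous)
  show "continuous_on quad (dh 1)"
    using dd by (meson continuous_on_eq_continuous_within has_derivative_continuous insertI1)
  show "continuous_on quad (dh 2)"
    using dd by (meson continuous_on_eq_continuous_within has_derivative_continuous insertI2 singletonI)
qed

lemma deriv_fst_quad:
  assumes dF: "\<forall>r\<ge>0. (F has_real_derivative dF r) (at r within {0..})" and p: "p \<in> quad"
  shows "((\<lambda>p. F (fst p)) has_derivative (\<lambda>v. dF (fst p) * fst v)) (at p within quad)"
proof -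
  have "((\<lambda>p. F (fst p)) has_derivative (\<lambda>y. (*) (dF (fst p)) (fst y))) (at p within quad)"
  proof (rule has_derivative_in_compose2[of "{0..}" F "\<lambda>r. (*) (dF r)" fst quad p fst])
    show "(F has_derivative (*) (dF x)) (at x within {0..})" if "x \<in> {0..}" for x
      using dF that by (simp add: has_field_derivative_def)
    show "fst ` quad \<subseteq> {0..}" by (auto simp: quad_def)
    show "p \<in> quad" by (rule p)
    show "(fst has_derivative fst) (at p within quad)" by (auto intro!: derivative_eq_intros)
  qed
  then show ?thesis by simp
qed

lemma deriv_snd_quad:
  assumes dF: "\<forall>r\<ge>0. (F has_real_derivative dF r) (at r within {0..})" and p: "p \<in> quad"
  shows "((\<lambda>p. F (snd p)) has_derivative (\<lambda>v. dF (snd p) * snd v)) (at p within quad)"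
proof -
  have "((\<lambda>p. F (snd p)) has_derivative (\<lambda>y. (*) (dF (snd p)) (snd y))) (at p within quad)"
  proof (rule has_derivative_in_compose2[of "{0..}" F "\<lambda>r. (*) (dF r)" snd quad p snd])
    show "(F has_derivative (*) (dF x)) (at x within {0..})" if "x \<in> {0..}" for x
      using dF that by (simp add: has_field_derivative_def)
    show "snd ` quad \<subseteq> {0..}" by (auto simp: quad_def)
    show "p \<in> quad" by (rule p)
    show "(snd has_derivative snd) (at p within quad)" by (auto intro!: derivative_eq_intros)
  qed
  then show ?thesis by simp
qed

lemma arith1:
  fixes a1 a2 b1 b2 h1 h2 e0 u1 u2 v1 v2 hq hp f1q f1p f2q f2p :: real
  assumes gG: "a1 * (u1 - v1) + a2 * (u2 - v2) + 2 * e0 * (h1 * (u1 - v1) + h2 * (u2 - v2))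
       \<le> (f1q + f2q + 2 * e0 * hq) - (f1p + f2p + 2 * e0 * hp)"
  shows "0 \<le> ((f1q - f1p - a1 * (u1 - v1)) + (f2q - f2p - a2 * (u2 - v2))) + 2 * e0 * (hq - hp - h1 * (u1 - v1) - h2 * (u2 - v2))"
  using gG by (simp add: algebra_simps)
lemma arith2:
  fixes a1 a2 b1 b2 h1 h2 e0 u1 u2 v1 v2 hq hp f1q f1p f2q f2p e :: real
  assumes "0 \<le> ((f1q - f1p - a1 * (u1 - v1)) + (f2q - f2p - a2 * (u2 - v2))) + e * (hq - hp - h1 * (u1 - v1) - h2 * (u2 - v2))"
  shows "(f1p + f2p + e * hp) + (a1 + e * h1) * (u1 - v1) + (a2 + e * h2) * (u2 - v2) \<le> f1q + f2q + e * hq"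
  using assms by (simp add: algebra_simps)

lemma phi_grad:
  fixes F dF ddF :: "nat \<Rightarrow> real \<Rightarrow> real"
  assumes hF: "\<forall>j\<in>{1,2}. hyp_F (F j) (dF j) (ddF j)"
    and hh: "hyp_h h dh ddh"
    and cvx: "convex_on quad (\<lambda>p. F 1 (fst p) + F 2 (snd p) + 2 * \<epsilon>0 * h p)"
    and eps: "0 < \<epsilon>" "\<epsilon> \<le> \<epsilon>0"
    and p: "p \<in> quad" and q: "q \<in> quad"
  shows "(F 1 (fst p) + F 2 (snd p) + \<epsilon> * h p)
       + (dF 1 (fst p) + \<epsilon> * dh 1 p) * (fst q - fst p) + (dF 2 (snd p) + \<epsilon> * dh 2 p) * (snd q - snd p)
       \<le> F 1 (fst q) + F 2 (snd q) + \<epsilon> * h q"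
proof -
  have hF1: "hyp_F (F 1) (dF 1) (ddF 1)" and hF2: "hyp_F (F 2) (dF 2) (ddF 2)" using hF by auto
  have d1: "\<forall>r\<ge>0. (F 1 has_real_derivative dF 1 r) (at r within {0..})"
    and dd1: "\<forall>r\<ge>0. (dF 1 has_real_derivative ddF 1 r) (at r within {0..})"
    and pos1: "\<forall>r>0. ddF 1 r > 0"
    using hF1 unfolding hyp_F_def by auto
  have d2: "\<forall>r\<ge>0. (F 2 has_real_derivative dF 2 r) (at r within {0..})"
    and dd2: "\<forall>r\<ge>0. (dF 2 has_real_derivative ddF 2 r) (at r within {0..})"
    and pos2: "\<forall>r>0. ddF 2 r > 0"
    using hF2 unfolding hyp_F_def by auto
  have dh: "(h has_derivative (\<lambda>v. dh 1 p * fst v + dh 2 p * snd v)) (at p within quad)"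
    using hh p unfolding hyp_h_def by auto
  have p0: "fst p \<ge> 0" "snd p \<ge> 0" and q0: "fst q \<ge> 0" "snd q \<ge> 0" using p q by (auto simp: quad_def)
  have g1: "dF 1 (fst p) * (fst q - fst p) \<le> F 1 (fst q) - F 1 (fst p)"
    by (rule grad_1d[OF d1 dd1 pos1 p0(1) q0(1)])
  have g2: "dF 2 (snd p) * (snd q - snd p) \<le> F 2 (snd q) - F 2 (snd p)"
    by (rule grad_1d[OF d2 dd2 pos2 p0(2) q0(2)])
  define G where "G p = F 1 (fst p) + F 2 (snd p) + 2 * \<epsilon>0 * h p" for p
  have dG: "(G has_derivative (\<lambda>v. dF 1 (fst p) * fst v + dF 2 (snd p) * snd v
       + 2 * \<epsilon>0 * (dh 1 p * fst v + dh 2 p * snd v))) (at p within quad)"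
    unfolding G_def
    by (intro has_derivative_add has_derivative_mult_right deriv_fst_quad[OF d1 p]
        deriv_snd_quad[OF d2 p] dh)
  have gG: "dF 1 (fst p) * fst (q - p) + dF 2 (snd p) * snd (q - p)
       + 2 * \<epsilon>0 * (dh 1 p * fst (q - p) + dh 2 p * snd (q - p)) \<le> G q - G p"
  proof -
    have "G = (\<lambda>p. F 1 (fst p) + F 2 (snd p) + 2 * \<epsilon>0 * h p)" by (simp add: G_def fun_eq_iff)
    then have cvxG: "convex_on quad G" using cvx by simp
    show ?thesis by (rule grad_convex[OF cvxG convex_quad p q dG])
  qed
  define X where "X = (F 1 (fst q) - F 1 (fst p) - dF 1 (fst p) * (fst q - fst p))
       + (F 2 (snd q) - F 2 (snd p) - dF 2 (snd p) * (snd q - snd p))"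
  define Z where "Z = h q - h p - dh 1 p * (fst q - fst p) - dh 2 p * (snd q - snd p)"
  have X0: "0 \<le> X" using g1 g2 unfolding X_def by linarith
  have gG': "dF 1 (fst p) * (fst q - fst p) + dF 2 (snd p) * (snd q - snd p)
       + 2 * \<epsilon>0 * (dh 1 p * (fst q - fst p) + dh 2 p * (snd q - snd p))
       \<le> (F 1 (fst q) + F 2 (snd q) + 2 * \<epsilon>0 * h q) - (F 1 (fst p) + F 2 (snd p) + 2 * \<epsilon>0 * h p)"
    using gG unfolding G_def by (simp only: fst_diff snd_diff)
  have XZ: "0 \<le> X + 2 * \<epsilon>0 * Z" unfolding X_def Z_def by (rule arith1[OF gG'])
  have "0 \<le> X + \<epsilon> * Z"
  proof (cases "Z \<ge> 0")
    case True then show ?thesis using X0 eps by simp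
  next
    case False
    then have "\<epsilon>0 * Z \<le> \<epsilon> * Z" using eps by (intro mult_right_mono_neg) auto
    then show ?thesis using X0 XZ by linarith
  qed
  then show ?thesis unfolding X_def Z_def by (rule arith2)
qed


lemma energy_nn:
  fixes f :: "'a::euclidean_space \<Rightarrow> real"
  assumes m: "f \<in> borel_measurable lborel" and n: "\<forall>x. 0 \<le> f x"
  shows "(if integrable lborel f then ereal (\<integral>x. f x \<partial>lborel) else \<infinity>)
       = enn2ereal (\<integral>\<^sup>+x. ennreal (f x) \<partial>lborel)"
proof (cases "integrable lborel f")
  case True
  then have "(\<integral>\<^sup>+x. ennreal (f x) \<partial>lborel) = ennreal (\<integral>x. f x \<partial>lborel)"
    using n by (intro nn_integral_eq_integral) auto
  moreover have "0 \<le> (\<integral>x. f x \<partial>lborel)" using n by (intro integral_nonneg_AE) auto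
  ultimately show ?thesis using True by simp
next
  case False
  have "(\<integral>\<^sup>+x. ennreal (f x) \<partial>lborel) = top"
  proof (rule ccontr)
    assume "(\<integral>\<^sup>+x. ennreal (f x) \<partial>lborel) \<noteq> top"
    then obtain r where "(\<integral>\<^sup>+x. ennreal (f x) \<partial>lborel) = ennreal r"
      using ennreal_cases by (metis top_neq_ennreal)
    then have "integrable lborel f" using m n by (intro integrableI_nn_integral_finite) auto
    then show False using False by simp
  qed
  then show ?thesis using False by simp
qed

lemma energy_split:
  fixes K :: "'a::euclidean_space \<Rightarrow> real" and \<Phi> :: "real \<times> real \<Rightarrow> real"
  assumes \<Phi>: "\<And>a b. \<Phi> (a, b) = F 1 a + F 2 b + \<epsilon> * h (a, b)"
    and c\<Phi>: "continuous_on quad \<Phi>" and \<Phi>0: "\<forall>p\<in>quad. 0 \<le> \<Phi> p"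
    and ma: "\<rho>a \<in> borel_measurable lborel" and mb: "\<rho>b \<in> borel_measurable lborel"
    and na: "\<forall>x. 0 \<le> \<rho>a x" and nb: "\<forall>x. 0 \<le> \<rho>b x"
    and mc: "conv K \<rho>b \<in> borel_measurable lborel" and nc: "\<forall>x. 0 \<le> conv K \<rho>b x"
  shows "energy \<epsilon> F h K \<rho>a \<rho>b = enn2ereal (\<integral>\<^sup>+x. ennreal (\<Phi> (\<rho>a x, \<rho>b x)) \<partial>lborel)
      + enn2ereal (\<integral>\<^sup>+x. ennreal (\<rho>a x * conv K \<rho>b x) \<partial>lborel)"
proof -
  have mP: "(\<lambda>x. \<Phi> (\<rho>a x, \<rho>b x)) \<in> borel_measurable lborel"
    by (rule meas_quad[OF c\<Phi> ma mb]) (use na nb in auto)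
  have nP: "0 \<le> \<Phi> (\<rho>a x, \<rho>b x)" for x using \<Phi>0 na nb by (auto simp: quad_def)
  have nI: "0 \<le> \<rho>a x * conv K \<rho>b x" for x using na nc by (simp add: mult_nonneg_nonneg)
  have mI: "(\<lambda>x. \<rho>a x * conv K \<rho>b x) \<in> borel_measurable lborel" using ma mc by (rule borel_measurable_times)
  have feq: "(\<lambda>x. F 1 (\<rho>a x) + F 2 (\<rho>b x) + \<epsilon> * h (\<rho>a x, \<rho>b x) + \<rho>a x * conv K \<rho>b x)
      = (\<lambda>x. \<Phi> (\<rho>a x, \<rho>b x) + \<rho>a x * conv K \<rho>b x)" by (simp add: \<Phi>)
  have "energy \<epsilon> F h K \<rho>a \<rho>b = (if integrable lborel (\<lambda>x. \<Phi> (\<rho>a x, \<rho>b x) + \<rho>a x * conv K \<rho>b x)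
      then ereal (\<integral>x. \<Phi> (\<rho>a x, \<rho>b x) + \<rho>a x * conv K \<rho>b x \<partial>lborel) else \<infinity>)"
    unfolding energy_def Let_def feq ..
  also have "\<dots> = enn2ereal (\<integral>\<^sup>+x. ennreal (\<Phi> (\<rho>a x, \<rho>b x) + \<rho>a x * conv K \<rho>b x) \<partial>lborel)"
    using nP nI by (intro energy_nn borel_measurable_add mP mI) (auto intro: add_nonneg_nonneg)
  also have "(\<integral>\<^sup>+x. ennreal (\<Phi> (\<rho>a x, \<rho>b x) + \<rho>a x * conv K \<rho>b x) \<partial>lborel)
      = (\<integral>\<^sup>+x. ennreal (\<Phi> (\<rho>a x, \<rho>b x)) + ennreal (\<rho>a x * conv K \<rho>b x) \<partial>lborel)"
    using nP nI by (intro nn_integral_cong) (simp add: ennreal_plus)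
  also have "\<dots> = (\<integral>\<^sup>+x. ennreal (\<Phi> (\<rho>a x, \<rho>b x)) \<partial>lborel) + (\<integral>\<^sup>+x. ennreal (\<rho>a x * conv K \<rho>b x) \<partial>lborel)"
    using mP mI by (intro nn_integral_add) auto
  finally show ?thesis by (simp add: plus_ennreal.rep_eq)
qed

lemma K_int_P2:
  fixes K :: "'a::euclidean_space \<Rightarrow> real"
  assumes Kc: "continuous_on UNIV K" and K0: "\<forall>x. 0 \<le> K x" and C: "\<forall>z. K z \<le> C * (1 + (norm z)\<^sup>2)"
    and P: "P2_density \<rho>"
  shows "integrable lborel (\<lambda>y. K (x - y) * \<rho> y)"
proof -
  have n: "\<forall>y. 0 \<le> \<rho> y" and i: "integrable lborel \<rho>" and i2: "integrable lborel (\<lambda>y. (norm y)\<^sup>2 * \<rho> y)"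
    using P by (auto simp: P2_density_def)
  have "0 \<le> K 0" using K0 by blast
  also have "K 0 \<le> C * (1 + (norm (0::'a))\<^sup>2)" using C by blast
  finally have C0: "0 \<le> C" by simp
  show ?thesis
  proof (rule Bochner_Integration.integrable_bound[of _ "\<lambda>y. C * (1 + 2 * (norm x)\<^sup>2) * \<rho> y + 2 * C * ((norm y)\<^sup>2 * \<rho> y)"])
    show "integrable lborel (\<lambda>y. C * (1 + 2 * (norm x)\<^sup>2) * \<rho> y + 2 * C * ((norm y)\<^sup>2 * \<rho> y))"
      using i i2 by (intro Bochner_Integration.integrable_add integrable_mult_right) auto
    have "(\<lambda>y. K (x - y)) \<in> borel_measurable lborel"
      by (rule borel_measurable_continuous_on[OF Kc]) simp
    then show "(\<lambda>y. K (x - y) * \<rho> y) \<in> borel_measurable lborel"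
      using borel_measurable_integrable[OF i] by (rule borel_measurable_times)
    show "AE y in lborel. norm (K (x - y) * \<rho> y) \<le> norm (C * (1 + 2 * (norm x)\<^sup>2) * \<rho> y + 2 * C * ((norm y)\<^sup>2 * \<rho> y))"
    proof (intro AE_I2)
      fix y
      have ny: "0 \<le> \<rho> y" using n by blast
      have tri: "norm (x - y) \<le> norm x + norm y" by (rule norm_triangle_ineq4)
      have "(norm (x - y))\<^sup>2 \<le> (norm x + norm y)\<^sup>2" using tri by (intro power_mono) auto
      also have "\<dots> \<le> 2 * (norm x)\<^sup>2 + 2 * (norm y)\<^sup>2"
        using sum_squares_ge_zero[of "norm x - norm y" 0] by (simp add: power2_eq_square algebra_simps)
      finally have sq: "(norm (x - y))\<^sup>2 \<le> 2 * (norm x)\<^sup>2 + 2 * (norm y)\<^sup>2" .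
      have "K (x - y) \<le> C * (1 + (norm (x - y))\<^sup>2)" using C by blast
      also have "\<dots> \<le> C * (1 + 2 * (norm x)\<^sup>2 + 2 * (norm y)\<^sup>2)" using sq C0 by (intro mult_left_mono) auto
      finally have Kb: "K (x - y) \<le> C * (1 + 2 * (norm x)\<^sup>2 + 2 * (norm y)\<^sup>2)" .
      have "K (x - y) * \<rho> y \<le> C * (1 + 2 * (norm x)\<^sup>2 + 2 * (norm y)\<^sup>2) * \<rho> y"
        using Kb ny by (rule mult_right_mono)
      also have "\<dots> = C * (1 + 2 * (norm x)\<^sup>2) * \<rho> y + 2 * C * ((norm y)\<^sup>2 * \<rho> y)"
        by (simp add: algebra_simps)
      finally have le: "K (x - y) * \<rho> y \<le> C * (1 + 2 * (norm x)\<^sup>2) * \<rho> y + 2 * C * ((norm y)\<^sup>2 * \<rho> y)" .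
      have "0 \<le> K (x - y) * \<rho> y" using K0 ny by simp
      then show "norm (K (x - y) * \<rho> y) \<le> norm (C * (1 + 2 * (norm x)\<^sup>2) * \<rho> y + 2 * C * ((norm y)\<^sup>2 * \<rho> y))"
        using le by simp
    qed
  qed
qed


theorem lemma3p2:
  fixes K :: "'a::euclidean_space \<Rightarrow> real"
    and F dF ddF :: "nat \<Rightarrow> real \<Rightarrow> real"
    and h :: "real \<times> real \<Rightarrow> real"
    and dh :: "nat \<Rightarrow> real \<times> real \<Rightarrow> real"
    and ddh :: "nat \<Rightarrow> nat \<Rightarrow> real \<times> real \<Rightarrow> real"
    and \<epsilon>0 \<epsilon> :: real
    and \<rho>1s \<rho>2s :: "nat \<Rightarrow> 'a \<Rightarrow> real"
    and \<rho>1 \<rho>2 :: "'a \<Rightarrow> real"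
  assumes hK: "hyp_K K"
    and hF: "\<forall>j\<in>{1,2}. hyp_F (F j) (dF j) (ddF j)"
    and hh: "hyp_h h dh ddh"
    and htheta: "hyp_theta dF ddF ddh"
    and eps0_pos: "\<epsilon>0 > 0"
    and eps0_convex: "convex_on quad (\<lambda>p. F 1 (fst p) + F 2 (snd p) + 2 * \<epsilon>0 * h p)"
    and eps: "0 < \<epsilon>" "\<epsilon> \<le> \<epsilon>0"
    and P2s: "\<forall>n. P2_density (\<rho>1s n) \<and> P2_density (\<rho>2s n)"
    and P2: "P2_density \<rho>1" "P2_density \<rho>2"
    and conv1: "weakL1_conv \<rho>1s \<rho>1"
    and conv2: "weakL1_conv \<rho>2s \<rho>2"
  shows "energy \<epsilon> F h K \<rho>1 \<rho>2 \<le> liminf (\<lambda>n. energy \<epsilon> F h K (\<rho>1s n) (\<rho>2s n))"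
proof -
  have hF1: "hyp_F (F 1) (dF 1) (ddF 1)" and hF2: "hyp_F (F 2) (dF 2) (ddF 2)" using hF by auto
  define \<Phi> where "\<Phi> p = F 1 (fst p) + F 2 (snd p) + \<epsilon> * h p" for p
  define D1 where "D1 p = dF 1 (fst p) + \<epsilon> * dh 1 p" for p
  define D2 where "D2 p = dF 2 (snd p) + \<epsilon> * dh 2 p" for p
  have ch: "continuous_on quad h" "continuous_on quad (dh 1)" "continuous_on quad (dh 2)"
    using hyph_cont[OF hh] by auto
  have c\<Phi>: "continuous_on quad \<Phi>"
  proof -
    have "continuous_on quad (\<lambda>p. F 1 (fst p) + F 2 (snd p) + \<epsilon> * h p)"
      by (intro continuous_on_add continuous_on_mult continuous_on_const ch(1)
          cont_fst_quad[OF hypF_cont(1)[OF hF1]] cont_snd_quad[OF hypF_cont(1)[OF hF2]])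
    then show ?thesis by (simp add: \<Phi>_def[abs_def])
  qed
  have cD1: "continuous_on quad D1"
  proof -
    have "continuous_on quad (\<lambda>p. dF 1 (fst p) + \<epsilon> * dh 1 p)"
      by (intro continuous_on_add continuous_on_mult continuous_on_const ch(2)
          cont_fst_quad[OF hypF_cont(2)[OF hF1]])
    then show ?thesis by (simp add: D1_def[abs_def])
  qed
  have cD2: "continuous_on quad D2"
  proof -
    have "continuous_on quad (\<lambda>p. dF 2 (snd p) + \<epsilon> * dh 2 p)"
      by (intro continuous_on_add continuous_on_mult continuous_on_const ch(3)
          cont_snd_quad[OF hypF_cont(2)[OF hF2]])
    then show ?thesis by (simp add: D2_def[abs_def])
  qed
  have grad: "\<forall>p\<in>quad. \<forall>q\<in>quad. \<Phi> p + D1 p * (fst q - fst p) + D2 p * (snd q - snd p) \<le> \<Phi> q"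
    unfolding \<Phi>_def D1_def D2_def using phi_grad[OF hF hh eps0_convex eps] by blast
  have \<Phi>0: "\<forall>p\<in>quad. 0 \<le> \<Phi> p"
  proof
    fix q assume q: "q \<in> quad"
    have z: "(0::real, 0::real) \<in> quad" by (simp add: quad_def)
    have "F 1 0 = 0" "dF 1 0 = 0" using hF1 by (auto simp: hyp_F_def)
    moreover have "F 2 0 = 0" "dF 2 0 = 0" using hF2 by (auto simp: hyp_F_def)
    moreover have "h (0, 0) = 0" "dh 1 (0, 0) = 0" "dh 2 (0, 0) = 0"
      using hh z unfolding hyp_h_def by auto
    ultimately have "\<Phi> (0, 0) = 0" "D1 (0, 0) = 0" "D2 (0, 0) = 0"
      by (simp_all add: \<Phi>_def D1_def D2_def)
    then show "0 \<le> \<Phi> q" using grad z q by fastforce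
  qed
  have Kc: "continuous_on UNIV K" and K0: "\<forall>x. 0 \<le> K x" using K_growth[OF hK] by auto
  obtain C where C: "\<forall>z. K z \<le> C * (1 + (norm z)\<^sup>2)" using K_growth(3)[OF hK] by blast
  have dens_of: "dens \<rho>" if "P2_density \<rho>" for \<rho> :: "'a \<Rightarrow> real"
    using that by (simp add: P2_density_def dens_def)
  have d1: "dens \<rho>1" and d2: "dens \<rho>2" using P2 dens_of by auto
  have ds: "\<forall>n. dens (\<rho>1s n) \<and> dens (\<rho>2s n)" using P2s dens_of by auto
  have ik: "\<forall>x. integrable lborel (\<lambda>y. K (x - y) * \<rho>2 y)" using K_int_P2[OF Kc K0 C P2(2)] by blast
  have iks: "\<forall>n x. integrable lborel (\<lambda>y. K (x - y) * \<rho>2s n y)"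
    using K_int_P2[OF Kc K0 C] P2s by blast
  have n1: "\<forall>x. 0 \<le> \<rho>1 x" and n2: "\<forall>x. 0 \<le> \<rho>2 x" and i1: "integrable lborel \<rho>1"
    and i2: "integrable lborel \<rho>2" using d1 d2 by (auto simp: dens_def)
  have ns: "\<forall>n x. 0 \<le> \<rho>1s n x \<and> 0 \<le> \<rho>2s n x" and iss: "\<forall>n. integrable lborel (\<rho>1s n) \<and> integrable lborel (\<rho>2s n)"
    using ds by (auto simp: dens_def)
  have L: "enn2ereal (\<integral>\<^sup>+x. ennreal (\<Phi> (\<rho>1 x, \<rho>2 x)) \<partial>lborel)
     \<le> liminf (\<lambda>n. enn2ereal (\<integral>\<^sup>+x. ennreal (\<Phi> (\<rho>1s n x, \<rho>2s n x)) \<partial>lborel))"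
    by (rule local_lsc[OF c\<Phi> cD1 cD2 \<Phi>0 grad n1 n2 ns i1 i2 iss conv1 conv2])
  have I: "enn2ereal (\<integral>\<^sup>+x. ennreal (\<rho>1 x * conv K \<rho>2 x) \<partial>lborel)
     \<le> liminf (\<lambda>n. enn2ereal (\<integral>\<^sup>+x. ennreal (\<rho>1s n x * conv K (\<rho>2s n) x) \<partial>lborel))"
    by (rule inter_lsc[OF Kc K0 d1 d2 ds ik iks conv1 conv2])
  have \<Phi>eq: "\<And>a b. \<Phi> (a, b) = F 1 a + F 2 b + \<epsilon> * h (a, b)" by (simp add: \<Phi>_def)
  have split: "energy \<epsilon> F h K \<rho>a \<rho>b = enn2ereal (\<integral>\<^sup>+x. ennreal (\<Phi> (\<rho>a x, \<rho>b x)) \<partial>lborel)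
      + enn2ereal (\<integral>\<^sup>+x. ennreal (\<rho>a x * conv K \<rho>b x) \<partial>lborel)"
    if da: "dens \<rho>a" and db: "dens \<rho>b" and ikb: "\<forall>x. integrable lborel (\<lambda>y. K (x - y) * \<rho>b y)"
    for \<rho>a \<rho>b
  proof (rule energy_split[OF \<Phi>eq c\<Phi> \<Phi>0])
    show "\<rho>a \<in> borel_measurable lborel" using da by (auto simp: dens_def intro: borel_measurable_integrable)
    show "\<rho>b \<in> borel_measurable lborel" using db by (auto simp: dens_def intro: borel_measurable_integrable)
    show "\<forall>x. 0 \<le> \<rho>a x" "\<forall>x. 0 \<le> \<rho>b x" using da db by (auto simp: dens_def)
    show "conv K \<rho>b \<in> borel_measurable lborel" by (rule conv_meas[OF Kc K0 db ikb])
    show "\<forall>x. 0 \<le> conv K \<rho>b x" using conv_nonneg[OF K0 db] by blast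
  qed
  define a where "a n = enn2ereal (\<integral>\<^sup>+x. ennreal (\<Phi> (\<rho>1s n x, \<rho>2s n x)) \<partial>lborel)" for n
  define b where "b n = enn2ereal (\<integral>\<^sup>+x. ennreal (\<rho>1s n x * conv K (\<rho>2s n) x) \<partial>lborel)" for n
  have "energy \<epsilon> F h K \<rho>1 \<rho>2 = enn2ereal (\<integral>\<^sup>+x. ennreal (\<Phi> (\<rho>1 x, \<rho>2 x)) \<partial>lborel)
      + enn2ereal (\<integral>\<^sup>+x. ennreal (\<rho>1 x * conv K \<rho>2 x) \<partial>lborel)"
    by (rule split[OF d1 d2 ik])
  also have "\<dots> \<le> liminf a + liminf b" unfolding a_def b_def using L I by (rule add_mono)
  also have "\<dots> \<le> liminf (\<lambda>n. a n + b n)"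
    by (rule Liminf_add_le) (auto simp: a_def b_def)
  also have "(\<lambda>n. a n + b n) = (\<lambda>n. energy \<epsilon> F h K (\<rho>1s n) (\<rho>2s n))"
  proof
    fix n
    have "dens (\<rho>1s n)" "dens (\<rho>2s n)" using ds by auto
    moreover have "\<forall>x. integrable lborel (\<lambda>y. K (x - y) * \<rho>2s n y)" using iks by blast
    ultimately show "a n + b n = energy \<epsilon> F h K (\<rho>1s n) (\<rho>2s n)"
      unfolding a_def b_def using split by metis
  qed
  finally show ?thesis .
qed


end
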